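(* Let the shallow network have activation $\psi\in\{\mathrm{sigmoid},\tanh\}$ and let $\mathcal{X}\subseteq\mathbb{R}^{V_0}$ contain a non-empty open set. Then for every $n\in\mathbb{N}_0$ and every $m=(m_\emptyset,m_0,\dots,m_n)\in\mathbb{N}_0^{n+2}$, \[ \mathcal{E}(\mathcal{X})=\mathcal{E}_P^m(\mathcal{X})=\mathcal{E}_0 . \]
   Context: Shallow network: finite pairwise disjoint sets $V_0,V_1,V_2$ and activation $\psi$; $E=(V_0\times V_1)\cup(V_1\times V_2)$; $\Theta=\mathbb{R}^E\times\mathbb{R}^{V_1\cup V_2}$, $\theta=(w,\beta)$; $w_{j\bullet}=(w_{jl})_{l\in V_2}$, $w_{\bullet j}=(w_{ij})_{i\in V_0}$. $\mathrm{sigmoid}(x)=1/(1+e^{-x})$. (In the paper $\mathcal{X}$ is the support of the input distribution.) Efficient parameters: $\theta$ is efficient on $\mathcal{X}$ if (a) $w_{k\bullet}\not\equiv0$ for all $k\in V_1$ and (b) the only $(\lambda_j)_{j\in V_1\cup\{\emptyset\}}$ with $\lambda_\emptyset+\sum_{j\in V_1}\lambda_j\psi(\beta_j+\sum_{i\in V_0}x_iw_{ij})=0$ for all $x\in\mathcal{X}$ is $\lambda\equiv0$; $\mathcal{E}(\mathcal{X})$ is the set of efficient parameters. Polynomial efficiency: $\theta$ is $m$-polynomially efficient on $\mathcal{X}$ if $w_{k\bullet}\not\equiv0$ for all $k\in V_1$, $\psi$ is $n$ times differentiable, and the only polynomials $P^{(\emptyset)}$ of degree $\le m_\emptyset$ and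 $P^{(k)}_j$ ($j\in V_1$, $0\le k\le n$) of degree $\le m_k$ on $\mathbb{R}^{V_0}$ with $P^{(\emptyset)}(x)+\sum_{j\in V_1}\sum_{k=0}^nP^{(k)}_j(x)\psi^{(k)}(\beta_j+\sum_{i}x_iw_{ij})=0$ for all $x\in\mathcal{X}$ are zero; $\mathcal{E}_P^m(\mathcal{X})$ is the set of such $\theta$. $\mathcal{E}_0=\{\theta\in\Theta:\ w_{j\bullet}\neq0\ \forall j\in V_1;\ w_{\bullet j}\neq0\ \forall j\in V_1;\ (w_{\bullet i},\beta_i)\neq\pm(w_{\bullet j},\beta_j)\ \forall i\neq j\in V_1\}$. *)

theory Defs
  imports "HOL-Analysis.Analysis"
begin

definition sigmoid :: "real \<Rightarrow> real" where
  "sigmoid x = 1 / (1 + exp (- x))"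

definition edges :: "'v set \<Rightarrow> 'v set \<Rightarrow> 'v set \<Rightarrow> ('v \<times> 'v) set" where
  "edges V0 V1 V2 = (V0 \<times> V1) \<union> (V1 \<times> V2)"

text \<open>Parameter space Theta = R^E x R^(V1 u V2); parameters are (w, beta), with values
  outside the index sets fixed to undefined (extensional functions).\<close>
definition Theta :: "'v set \<Rightarrow> 'v set \<Rightarrow> 'v set \<Rightarrow> ((('v \<times> 'v) \<Rightarrow> real) \<times> ('v \<Rightarrow> real)) set" where
  "Theta V0 V1 V2 = {(w, \<beta>). w \<in> extensional (edges V0 V1 V2) \<and> \<beta> \<in> extensional (V1 \<union> V2)}"

definition preact :: "'v set \<Rightarrow> (('v \<times> 'v) \<Rightarrow> real) \<Rightarrow> ('v \<Rightarrow> real) \<Rightarrow> 'v \<Rightarrow> ('v \<Rightarrow> real) \<Rightarrow> real" where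
  "preact V0 w \<beta> j x = \<beta> j + (\<Sum>i\<in>V0. x i * w (i, j))"

definition efficient_set ::
  "(real \<Rightarrow> real) \<Rightarrow> 'v set \<Rightarrow> 'v set \<Rightarrow> 'v set \<Rightarrow> ('v \<Rightarrow> real) set
     \<Rightarrow> ((('v \<times> 'v) \<Rightarrow> real) \<times> ('v \<Rightarrow> real)) set" where
  "efficient_set \<psi> V0 V1 V2 X = {(w, \<beta>) \<in> Theta V0 V1 V2.
     (\<forall>k\<in>V1. \<exists>l\<in>V2. w (k, l) \<noteq> 0) \<and>
     (\<forall>(l0::real) (lam::'v \<Rightarrow> real).
        (\<forall>x\<in>X. l0 + (\<Sum>j\<in>V1. lam j * \<psi> (preact V0 w \<beta> j x)) = 0)
        \<longrightarrow> l0 = 0 \<and> (\<forall>j\<in>V1. lam j = 0))}"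

text \<open>Multi-indices (exponent vectors) on V0 of total degree at most d; a polynomial of
  degree at most d on R^V0 is given by a coefficient function on these multi-indices.\<close>
definition multi_idx :: "'v set \<Rightarrow> nat \<Rightarrow> ('v \<Rightarrow> nat) set" where
  "multi_idx V0 d = {\<alpha>. \<alpha> \<in> V0 \<rightarrow>\<^sub>E {..d} \<and> sum \<alpha> V0 \<le> d}"

definition poly_eval :: "'v set \<Rightarrow> nat \<Rightarrow> (('v \<Rightarrow> nat) \<Rightarrow> real) \<Rightarrow> ('v \<Rightarrow> real) \<Rightarrow> real" where
  "poly_eval V0 d c x = (\<Sum>\<alpha>\<in>multi_idx V0 d. c \<alpha> * (\<Prod>i\<in>V0. x i ^ \<alpha> i))"

text \<open>m-polynomially efficient parameters E_P^m(X), m = (mE, m 0, ..., m n).\<close>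
definition poly_efficient_set ::
  "(real \<Rightarrow> real) \<Rightarrow> nat \<Rightarrow> nat \<Rightarrow> (nat \<Rightarrow> nat) \<Rightarrow> 'v set \<Rightarrow> 'v set \<Rightarrow> 'v set
     \<Rightarrow> ('v \<Rightarrow> real) set \<Rightarrow> ((('v \<times> 'v) \<Rightarrow> real) \<times> ('v \<Rightarrow> real)) set" where
  "poly_efficient_set \<psi> n mE m V0 V1 V2 X = {(w, \<beta>) \<in> Theta V0 V1 V2.
     (\<forall>k\<in>V1. \<exists>l\<in>V2. w (k, l) \<noteq> 0) \<and>
     (\<forall>k<n. (deriv ^^ k) \<psi> differentiable_on UNIV) \<and>
     (\<forall>(cE :: ('v \<Rightarrow> nat) \<Rightarrow> real) (c :: 'v \<Rightarrow> nat \<Rightarrow> ('v \<Rightarrow> nat) \<Rightarrow> real).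
        (\<forall>x\<in>X. poly_eval V0 mE cE x
            + (\<Sum>j\<in>V1. \<Sum>k\<le>n. poly_eval V0 (m k) (c j k) x
                 * (deriv ^^ k) \<psi> (preact V0 w \<beta> j x)) = 0)
        \<longrightarrow> (\<forall>\<alpha>\<in>multi_idx V0 mE. cE \<alpha> = 0) \<and>
            (\<forall>j\<in>V1. \<forall>k\<le>n. \<forall>\<alpha>\<in>multi_idx V0 (m k). c j k \<alpha> = 0))}"

definition E0_set ::
  "'v set \<Rightarrow> 'v set \<Rightarrow> 'v set \<Rightarrow> ((('v \<times> 'v) \<Rightarrow> real) \<times> ('v \<Rightarrow> real)) set" where
  "E0_set V0 V1 V2 = {(w, \<beta>) \<in> Theta V0 V1 V2.
     (\<forall>j\<in>V1. \<exists>l\<in>V2. w (j, l) \<noteq> 0) \<and>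
     (\<forall>j\<in>V1. \<exists>i\<in>V0. w (i, j) \<noteq> 0) \<and>
     (\<forall>i\<in>V1. \<forall>j\<in>V1. i \<noteq> j \<longrightarrow>
        \<not> ((\<forall>l\<in>V0. w (l, i) = w (l, j)) \<and> \<beta> i = \<beta> j) \<and>
        \<not> ((\<forall>l\<in>V0. w (l, i) = - w (l, j)) \<and> \<beta> i = - \<beta> j))}"

end

theory Submission
  imports Defs "HOL-Complex_Analysis.Complex_Analysis" "HOL-Computational_Algebra.Polynomial"
begin


definition csig :: "complex \<Rightarrow> complex" where
  "csig z = 1 / (1 + exp (- z))"

lemma exp_eq_minus1:
  assumes "exp (w::complex) = -1"
  shows "\<exists>k::int. w = \<i> * pi * of_int (2 * k + 1)"
proof -
  have "exp w = exp (\<i> * pi)" using assms by simp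
  then obtain k :: int where "w = \<i> * pi + (of_int (2 * k) * pi) * \<i>"
    unfolding exp_eq by blast
  then have "w = \<i> * pi * of_int (2 * k + 1)" by (simp add: algebra_simps)
  then show ?thesis by blast
qed

lemma exp_odd:
  fixes k :: int
  shows "exp (\<i> * pi * of_int (2 * k + 1)) = (-1::complex)"
proof -
  have "exp (\<i> * pi * of_int (2 * k + 1)) = exp (\<i> * pi + (of_int (2 * k) * pi) * \<i>)"
    by (simp add: algebra_simps)
  also have "\<dots> = exp (\<i> * pi)" unfolding exp_eq by blast
  finally show ?thesis by simp
qed

lemma islimpt_cocountable:
  fixes P :: "complex set"
  assumes "countable P"
  shows "t0 islimpt (UNIV - P)"
proof (rule islimpt_approachable[THEN iffD2], intro allI impI)
  fix e :: real assume e: "e > 0"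
  let ?L = "(\<lambda>r::real. t0 + of_real r) ` {0<..<e}"
  have "uncountable {0<..<e}" using e by (simp add: uncountable_open_interval)
  moreover have "inj_on (\<lambda>r::real. t0 + of_real r) {0<..<e}" by (auto simp: inj_on_def)
  ultimately have "uncountable ?L" using countable_image_inj_on by blast
  then obtain x where x: "x \<in> ?L" "x \<notin> P" using assms
    by (metis countable_subset subsetI)
  then obtain r where r: "r \<in> {0<..<e}" "x = t0 + of_real r" by auto
  show "\<exists>x'\<in>UNIV - P. x' \<noteq> t0 \<and> dist x' t0 < e"
    using x r by (intro bexI[of _ x]) (auto simp: dist_norm)
qed

lemma csig_limit:
  fixes A B :: real and t0 :: complex
  assumes A: "A \<noteq> 0" and e: "exp (-(of_real A * t0 + of_real B)) = -1"
  shows "((\<lambda>t. (t - t0) * csig (of_real A * t + of_real B)) \<longlongrightarrow> 1 / of_real A) (at t0)"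
proof -
  define f where "f t = 1 + exp (-(of_real A * t + of_real B))" for t :: complex
  have f0: "f t0 = 0" using e by (simp add: f_def)
  have "(f has_field_derivative (- of_real A * exp (-(of_real A * t0 + of_real B)))) (at t0)"
    unfolding f_def by (auto intro!: derivative_eq_intros)
  then have "(f has_field_derivative of_real A) (at t0)" using e by simp
  then have "((\<lambda>y. (f y - f t0) / (y - t0)) \<longlongrightarrow> of_real A) (at t0)"
    using has_field_derivative_iff by blast
  then have "((\<lambda>y. f y / (y - t0)) \<longlongrightarrow> of_real A) (at t0)" using f0 by simp
  then have lim: "((\<lambda>y. inverse (f y / (y - t0))) \<longlongrightarrow> inverse (of_real A)) (at t0)"
    using A by (intro tendsto_inverse) auto
  have ev: "\<forall>\<^sub>F y in at t0. inverse (f y / (y - t0)) = (y - t0) * csig (of_real A * y + of_real B)"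
    unfolding eventually_at_filter
    by (rule always_eventually) (auto simp: csig_def f_def field_simps)
  show ?thesis using Lim_transform_eventually[OF lim ev] by (simp add: divide_inverse)
qed

lemma Ints_abs_lt1:
  assumes "(r::real) \<in> \<int>" "\<bar>r\<bar> < 1" shows "r = 0"
proof -
  obtain k where k: "r = of_int k" using assms(1) by (auto elim: Ints_cases)
  then have "of_int \<bar>k\<bar> < (1::real)" using assms(2) by simp
  then have "\<bar>k\<bar> < 1" by linarith
  then show ?thesis using k by simp
qed

lemma countable_poles:
  fixes J :: "'j set"
  assumes "finite J" "\<forall>j\<in>J. a j \<noteq> 0"
  shows "countable {t::complex. \<exists>j\<in>J. 1 + exp (-(of_real (a j) * t + of_real (b j))) = 0}"
proof -
  let ?g = "\<lambda>(j, k::int). (- (\<i> * pi * of_int (2 * k + 1)) - of_real (b j)) / of_real (a j) :: complex"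
  have "{t::complex. \<exists>j\<in>J. 1 + exp (-(of_real (a j) * t + of_real (b j))) = 0} \<subseteq> ?g ` (J \<times> UNIV)"
  proof
    fix t assume "t \<in> {t::complex. \<exists>j\<in>J. 1 + exp (-(of_real (a j) * t + of_real (b j))) = 0}"
    then obtain j where j: "j \<in> J" "1 + exp (-(of_real (a j) * t + of_real (b j))) = 0" by auto
    then have "exp (-(of_real (a j) * t + of_real (b j))) = -1" by (simp add: add_eq_0_iff)
    then obtain k :: int where k: "-(of_real (a j) * t + of_real (b j)) = \<i> * pi * of_int (2 * k + 1)"
      using exp_eq_minus1 by blast
    have k2: "of_real (a j) * t + of_real (b j) = - (\<i> * pi * of_int (2 * k + 1))"
      using k by (metis minus_minus)
    have k3: "t * of_real (a j) = - (\<i> * pi * of_int (2 * k + 1)) - of_real (b j)"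
      using k2 by (metis add_diff_cancel_right' mult.commute)
    have "t = ?g (j, k)" using k3 assms(2) j(1) by (simp add: eq_divide_eq)
    then show "t \<in> ?g ` (J \<times> UNIV)" using j(1) by blast
  qed
  moreover have "countable (?g ` (J \<times> UNIV))"
    using assms(1) by (intro countable_image countable_SIGMA) (auto intro: countable_finite)
  ultimately show ?thesis using countable_subset by blast
qed

lemma one_dim:
  fixes J :: "'j set" and a b :: "'j \<Rightarrow> real" and p :: "'j \<Rightarrow> nat \<Rightarrow> complex poly"
    and q :: "complex poly" and D :: nat
  assumes fin: "finite J" and anz: "\<forall>j\<in>J. a j \<noteq> 0"
    and dist: "\<forall>i\<in>J. \<forall>j\<in>J. i \<noteq> j \<longrightarrow> \<not> (a i = a j \<and> b i = b j) \<and> \<not> (a i = - a j \<and> b i = - b j)"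
    and eq: "\<forall>t. (\<forall>j\<in>J. 1 + exp (-(of_real (a j) * t + of_real (b j))) \<noteq> 0) \<longrightarrow>
          poly q t + (\<Sum>j\<in>J. \<Sum>d\<in>{1..D}. poly (p j d) t * csig (of_real (a j) * t + of_real (b j)) ^ d) = 0"
  shows "\<forall>j\<in>J. \<forall>d\<in>{1..D}. p j d = 0"
proof (rule ccontr)
  assume nt: "\<not> ?thesis"
  define J' where "J' = {j\<in>J. \<exists>d\<in>{1..D}. p j d \<noteq> 0}"
  obtain j0 where j0: "j0 \<in> J'" using nt J'_def by auto
  define T where "T = {j\<in>J'. b j / a j = b j0 / a j0}"
  have finT: "finite T" using fin by (simp add: T_def J'_def)
  have T0: "j0 \<in> T" using j0 by (simp add: T_def)
  define mx where "mx = Max ((\<lambda>j. \<bar>a j\<bar>) ` T)"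
  have "mx \<in> (\<lambda>j. \<bar>a j\<bar>) ` T" unfolding mx_def using finT T0 by (intro Max_in) auto
  then obtain js where js: "js \<in> T" "\<bar>a js\<bar> = mx" by auto
  have jsmax: "\<forall>j\<in>T. \<bar>a j\<bar> \<le> \<bar>a js\<bar>" using finT js(2) mx_def by auto
  have jsJ': "js \<in> J'" using js(1) by (simp add: T_def)
  have jsJ: "js \<in> J" using jsJ' by (simp add: J'_def)
  define A where "A = a js"
  define B where "B = b js"
  have A0: "A \<noteq> 0" using anz jsJ by (simp add: A_def)
  define Ds where "Ds = {d\<in>{1..D}. p js d \<noteq> 0}"
  have Dsne: "Ds \<noteq> {}" using jsJ' by (auto simp: J'_def Ds_def)
  have finDs: "finite Ds" by (simp add: Ds_def)
  define Dm where "Dm = Max Ds"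
  have DmDs: "Dm \<in> Ds" using Dsne finDs by (simp add: Dm_def)
  have Dm1: "Dm \<in> {1..D}" and pDm: "p js Dm \<noteq> 0" using DmDs by (auto simp: Ds_def)
  have top: "\<forall>d\<in>{1..D}. Dm < d \<longrightarrow> p js d = 0"
    using finDs Dm_def Ds_def by (metis (mono_tags, lifting) Max_ge leD mem_Collect_eq)
  have key: "poly (p js Dm) ((\<i> * pi * of_int n - of_real B) / of_real A) = 0"
    if nodd: "odd n" and nint: "\<forall>j\<in>J'. j \<noteq> js \<longrightarrow> \<bar>a j\<bar> < \<bar>A\<bar> \<longrightarrow> (a j / A) * of_int n \<notin> \<int>"
    for n :: int
  proof -
    define t0 where "t0 = (\<i> * pi * of_int n - of_real B) / (of_real A :: complex)"
    have ht0: "of_real A * t0 + of_real B = \<i> * pi * of_int n" using A0 by (simp add: t0_def field_simps)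
    obtain k where nk: "n = 2 * k + 1" using nodd by (metis oddE)
    have "-(of_real A * t0 + of_real B) = \<i> * pi * of_int (2 * (- k - 1) + 1)"
      using ht0 nk by (simp add: algebra_simps)
    then have e0: "exp (-(of_real A * t0 + of_real B)) = -1" using exp_odd by metis
    have Ret0: "Re t0 = - B / A" and Imt0: "Im t0 = pi * n / A" using A0
      by (simp_all add: t0_def Re_divide Im_divide power2_eq_square field_simps)
    have others: "1 + exp (-(of_real (a j) * t0 + of_real (b j))) \<noteq> 0" if j: "j \<in> J'" "j \<noteq> js" for j
    proof
      assume "1 + exp (-(of_real (a j) * t0 + of_real (b j))) = 0"
      then have "exp (-(of_real (a j) * t0 + of_real (b j))) = -1" by (simp add: add_eq_0_iff)
      then obtain k' :: int where k': "-(of_real (a j) * t0 + of_real (b j)) = \<i> * pi * of_int (2 * k' + 1)"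
        using exp_eq_minus1 by blast
      have re: "a j * (- B / A) + b j = 0"
        using arg_cong[OF k', of Re] Ret0 by simp
      have im: "a j * (pi * n / A) = - (pi * of_int (2 * k' + 1))"
        using arg_cong[OF k', of Im] Imt0 by simp
      have ajnz: "a j \<noteq> 0" using anz j(1) by (simp add: J'_def)
      have "b j / a j = B / A" using re A0 ajnz by (simp add: field_simps)
      also have "\<dots> = b j0 / a j0" using js(1) by (simp add: T_def A_def B_def)
      finally have "j \<in> T" using j(1) by (simp add: T_def)
      then have le: "\<bar>a j\<bar> \<le> \<bar>A\<bar>" using jsmax by (simp add: A_def)
      show False
      proof (cases "\<bar>a j\<bar> = \<bar>A\<bar>")
        case True
        then have "a j = A \<or> a j = - A" by linarith
        moreover have "b j = a j * B / A" using re A0 by (simp add: field_simps)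
        ultimately have "(a j = A \<and> b j = B) \<or> (a j = - A \<and> b j = - B)" using A0 by auto
        then show False using dist j jsJ by (auto simp: J'_def A_def B_def)
      next
        case False
        then have lt: "\<bar>a j\<bar> < \<bar>A\<bar>" using le by simp
        have "pi * ((a j / A) * of_int n) = pi * of_int (- (2 * k' + 1))"
          using im A0 by (simp add: field_simps)
        then have "(a j / A) * of_int n = of_int (- (2 * k' + 1))"
          by (metis mult_left_cancel pi_neq_zero)
        then have "(a j / A) * of_int n \<in> \<int>" by simp
        then show False using nint j lt by blast
      qed
    qed
    define L where "L j d = (if j = js \<and> d = Dm then poly (p js Dm) t0 * (1 / of_real A) ^ Dm else 0)"
      for j d
    have Dmpos: "Dm > 0" using Dm1 by simp
    have lim0: "((\<lambda>t. (t - t0) ^ Dm) \<longlongrightarrow> 0) (at t0)"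
    proof -
      have "((\<lambda>t. (t - t0) ^ Dm) \<longlongrightarrow> (t0 - t0) ^ Dm) (at t0)"
        by (intro tendsto_intros)
      then show ?thesis using Dmpos by (simp add: zero_power)
    qed
    have limterm: "((\<lambda>t. (t - t0) ^ Dm * (poly (p j d) t * csig (of_real (a j) * t + of_real (b j)) ^ d))
        \<longlongrightarrow> L j d) (at t0)" if jd: "j \<in> J" "d \<in> {1..D}" for j d
    proof (cases "j \<in> J'")
      case False
      then have "p j d = 0" using jd by (auto simp: J'_def)
      moreover have "j \<noteq> js" using False jsJ' by auto
      ultimately show ?thesis by (simp add: L_def)
    next
      case jJ': True
      show ?thesis
      proof (cases "j = js")
        case False
        have nz: "1 + exp (-(of_real (a j) * t0 + of_real (b j))) \<noteq> 0" using others jJ' False by blast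
        have "isCont (\<lambda>t. csig (of_real (a j) * t + of_real (b j))) t0"
          unfolding csig_def using nz by (intro continuous_intros) auto
        then have c: "((\<lambda>t. csig (of_real (a j) * t + of_real (b j))) \<longlongrightarrow> csig (of_real (a j) * t0 + of_real (b j))) (at t0)"
          by (simp add: isCont_def)
        have "((\<lambda>t. (t - t0) ^ Dm * (poly (p j d) t * csig (of_real (a j) * t + of_real (b j)) ^ d))
          \<longlongrightarrow> 0 * (poly (p j d) t0 * csig (of_real (a j) * t0 + of_real (b j)) ^ d)) (at t0)"
          by (intro tendsto_mult lim0 tendsto_power c) (auto intro!: tendsto_intros)
        then show ?thesis using False by (simp add: L_def)
      next
        case True
        show ?thesis
        proof (cases "Dm < d")
          case True
          then have "p js d = 0" using top jd by blast
          then show ?thesis using True \<open>j = js\<close> by (simp add: L_def)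
        next
          case False
          then have dle: "d \<le> Dm" by simp
          have cl: "((\<lambda>t. (t - t0) * csig (of_real A * t + of_real B)) \<longlongrightarrow> 1 / of_real A) (at t0)"
            using csig_limit[OF A0 e0] .
          have lim1: "((\<lambda>t. (t - t0) ^ (Dm - d) * poly (p js d) t * ((t - t0) * csig (of_real A * t + of_real B)) ^ d)
             \<longlongrightarrow> (t0 - t0) ^ (Dm - d) * poly (p js d) t0 * (1 / of_real A) ^ d) (at t0)"
            using LIM_zero[OF tendsto_ident_at[of t0 UNIV]]
            by (intro tendsto_mult tendsto_power cl) (auto intro!: tendsto_intros)
          have eqf: "(t - t0) ^ (Dm - d) * poly (p js d) t * ((t - t0) * csig (of_real A * t + of_real B)) ^ d
              = (t - t0) ^ Dm * (poly (p js d) t * csig (of_real A * t + of_real B) ^ d)" for t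
          proof -
            have "(t - t0) ^ Dm = (t - t0) ^ (Dm - d) * (t - t0) ^ d"
              using dle by (simp add: power_add[symmetric])
            then show ?thesis by (simp add: power_mult_distrib)
          qed
          have Lval: "(t0 - t0) ^ (Dm - d) * poly (p js d) t0 * (1 / of_real A) ^ d = L js d"
            using dle by (cases "d = Dm") (auto simp: L_def)
          have feq: "(\<lambda>t. (t - t0) ^ Dm * (poly (p js d) t * csig (of_real A * t + of_real B) ^ d))
             = (\<lambda>t. (t - t0) ^ (Dm - d) * poly (p js d) t * ((t - t0) * csig (of_real A * t + of_real B)) ^ d)"
            by (rule ext, rule eqf[symmetric])
          have lim2: "((\<lambda>t. (t - t0) ^ (Dm - d) * poly (p js d) t * ((t - t0) * csig (of_real A * t + of_real B)) ^ d)
             \<longlongrightarrow> L js d) (at t0)"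
            using lim1 by (simp only: Lval)
          have "((\<lambda>t. (t - t0) ^ Dm * (poly (p js d) t * csig (of_real A * t + of_real B) ^ d)) \<longlongrightarrow> L js d) (at t0)"
            by (rule Lim_transform_eventually[OF lim2]) (intro always_eventually allI eqf)
          then show ?thesis using True by (simp only: A_def B_def)
        qed
      qed
    qed
    define S :: "complex set" where "S = UNIV - {t. \<exists>j\<in>J. 1 + exp (-(of_real (a j) * t + of_real (b j))) = 0}"
    define H where "H t = (t - t0) ^ Dm * poly q t +
       (\<Sum>j\<in>J. \<Sum>d\<in>{1..D}. (t - t0) ^ Dm * (poly (p j d) t * csig (of_real (a j) * t + of_real (b j)) ^ d))" for t
    have limH0: "(H \<longlongrightarrow> 0 * poly q t0 + (\<Sum>j\<in>J. \<Sum>d\<in>{1..D}. L j d)) (at t0)"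
    proof -
      have l1: "((\<lambda>t. (t - t0) ^ Dm * poly q t) \<longlongrightarrow> 0 * poly q t0) (at t0)"
        by (intro tendsto_mult lim0 tendsto_poly tendsto_ident_at)
      have l2: "((\<lambda>t. \<Sum>j\<in>J. \<Sum>d\<in>{1..D}. (t - t0) ^ Dm * (poly (p j d) t * csig (of_real (a j) * t + of_real (b j)) ^ d))
          \<longlongrightarrow> (\<Sum>j\<in>J. \<Sum>d\<in>{1..D}. L j d)) (at t0)"
      proof (rule tendsto_sum)
        fix j assume j: "j \<in> J"
        show "((\<lambda>t. \<Sum>d\<in>{1..D}. (t - t0) ^ Dm * (poly (p j d) t * csig (of_real (a j) * t + of_real (b j)) ^ d))
          \<longlongrightarrow> (\<Sum>d\<in>{1..D}. L j d)) (at t0)"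
        proof (rule tendsto_sum)
          fix d assume d: "d \<in> {1..D}"
          show "((\<lambda>t. (t - t0) ^ Dm * (poly (p j d) t * csig (of_real (a j) * t + of_real (b j)) ^ d))
            \<longlongrightarrow> L j d) (at t0)" using limterm[OF j d] .
        qed
      qed
      show ?thesis unfolding H_def by (rule tendsto_add[OF l1 l2])
    qed
    have sumL: "(\<Sum>j\<in>J. \<Sum>d\<in>{1..D}. L j d) = poly (p js Dm) t0 * (1 / of_real A) ^ Dm"
    proof -
      have inner: "(\<Sum>d\<in>{1..D}. L j d) = (if j = js then poly (p js Dm) t0 * (1 / of_real A) ^ Dm else 0)" for j
        using Dm1 by (cases "j = js") (simp_all add: L_def)
      have "(\<Sum>j\<in>J. \<Sum>d\<in>{1..D}. L j d) = (\<Sum>j\<in>J. if j = js then poly (p js Dm) t0 * (1 / of_real A) ^ Dm else 0)"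
        by (intro sum.cong refl inner)
      also have "\<dots> = poly (p js Dm) t0 * (1 / of_real A) ^ Dm" using fin jsJ by simp
      finally show ?thesis .
    qed
    have limH1: "(H \<longlongrightarrow> poly (p js Dm) t0 * (1 / of_real A) ^ Dm) (at t0)"
      using limH0 unfolding sumL by simp
    have limH: "(H \<longlongrightarrow> poly (p js Dm) t0 * (1 / of_real A) ^ Dm) (at t0 within S)"
      by (rule tendsto_within_subset[OF limH1]) simp
    have H0': "H t = 0" if 
        "t \<in> S"
     for t
    proof -
      from that[unfolded S_def] have "\<forall>j\<in>J. 1 + exp (-(of_real (a j) * t + of_real (b j))) \<noteq> 0" by blast
      then have G0: "poly q t + (\<Sum>j\<in>J. \<Sum>d\<in>{1..D}. poly (p j d) t * csig (of_real (a j) * t + of_real (b j)) ^ d) = 0"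
        using eq by blast
      have "H t = (t - t0) ^ Dm * (poly q t + (\<Sum>j\<in>J. \<Sum>d\<in>{1..D}. poly (p j d) t * csig (of_real (a j) * t + of_real (b j)) ^ d))"
        unfolding H_def by (simp only: distrib_left sum_distrib_left)
      then show "H t = 0" using G0 by simp
    qed
    have H0: "\<forall>\<^sub>F t in at t0 within S. H t = 0"
      unfolding eventually_at_filter by (rule always_eventually) (use H0' in blast)
    have nb: "at t0 within S \<noteq> bot"
      using islimpt_cocountable[OF countable_poles[OF fin anz]] trivial_limit_within unfolding S_def by blast
    have "poly (p js Dm) t0 * (1 / of_real A) ^ Dm = 0"
      using tendsto_unique[OF nb limH tendsto_eventually[OF H0]] .
    then show ?thesis using A0 by (simp add: t0_def)
  qed
  define N where "N j = (if \<exists>N::nat. N > 0 \<and> (a j / A) * real N \<in> \<int>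
      then (SOME N::nat. N > 0 \<and> (a j / A) * real N \<in> \<int>) else 1)" for j
  have Npos: "N j > 0" for j
  proof (cases "\<exists>N::nat. N > 0 \<and> (a j / A) * real N \<in> \<int>")
    case True
    then show ?thesis unfolding N_def using someI_ex[OF True] by simp
  next
    case False
    have "N j = 1" unfolding N_def by (rule if_not_P[OF False])
    then show ?thesis by simp
  qed
  have Nint: "(a j / A) * real (N j) \<in> \<int>" if "\<exists>N::nat. N > 0 \<and> (a j / A) * real N \<in> \<int>" for j
    unfolding N_def using someI_ex[OF that] that by simp
  define M where "M = (\<Prod>j\<in>J. N j)"
  have Mpos: "M > 0" unfolding M_def using Npos by (simp add: prod_pos)
  define tn where "tn s = (\<i> * pi * of_int (int (1 + 2 * s * M)) - of_real B) / (of_real A :: complex)" for s :: nat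
  have roots: "poly (p js Dm) (tn s) = 0" for s
    unfolding tn_def
  proof (rule key)
    show "odd (int (1 + 2 * s * M))" by simp
    show "\<forall>j\<in>J'. j \<noteq> js \<longrightarrow> \<bar>a j\<bar> < \<bar>A\<bar> \<longrightarrow> a j / A * of_int (int (1 + 2 * s * M)) \<notin> \<int>"
    proof (intro ballI impI notI)
      fix j assume j: "j \<in> J'" "j \<noteq> js" "\<bar>a j\<bar> < \<bar>A\<bar>"
        and ii: "a j / A * of_int (int (1 + 2 * s * M)) \<in> \<int>"
      define r where "r = a j / A"
      have jJ: "j \<in> J" using j(1) by (simp add: J'_def)
      have r0: "r \<noteq> 0" using anz jJ A0 by (simp add: r_def)
      have r1: "\<bar>r\<bar> < 1" using j(3) A0 by (simp add: r_def abs_div)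
      have ii': "r * real (1 + 2 * s * M) \<in> \<int>" using ii by (simp add: r_def)
      show False
      proof (cases "\<exists>N::nat. N > 0 \<and> (a j / A) * real N \<in> \<int>")
        case True
        have rN: "r * real (N j) \<in> \<int>" using Nint[OF True] by (simp add: r_def)
        have "N j dvd M" unfolding M_def using fin jJ by (rule dvd_prodI)
        then obtain c where c: "M = N j * c" by (auto elim: dvdE)
        have rM: "r * real M \<in> \<int>"
        proof -
          have "r * real M = (r * real (N j)) * of_nat c" by (simp add: c)
          then show ?thesis using rN by (metis Ints_mult Ints_of_nat)
        qed
        have "r = r * real (1 + 2 * s * M) - of_nat (2 * s) * (r * real M)"
          by (simp add: algebra_simps)
        also have "\<dots> \<in> \<int>" by (rule Ints_diff[OF ii' Ints_mult[OF Ints_of_nat rM]])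
        finally have "r \<in> \<int>" .
        then show False using Ints_abs_lt1 r0 r1 by blast
      next
        case False
        moreover have "(1 + 2 * s * M :: nat) > 0 \<and> (a j / A) * real (1 + 2 * s * M) \<in> \<int>"
          using ii' by (simp add: r_def)
        ultimately show False by blast
      qed
    qed
  qed
  have inj: "inj tn"
  proof (rule injI)
    fix s s' assume "tn s = tn s'"
    then have "\<i> * pi * of_int (int (1 + 2 * s * M)) - of_real B = \<i> * pi * of_int (int (1 + 2 * s' * M)) - (of_real B :: complex)"
      using A0 by (simp add: tn_def)
    then have "Im (\<i> * pi * of_int (int (1 + 2 * s * M)) - of_real B) = Im (\<i> * pi * of_int (int (1 + 2 * s' * M)) - (of_real B :: complex))"
      by simp
    then have "pi * real (1 + 2 * s * M) = pi * real (1 + 2 * s' * M)" by simp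
    then have "1 + 2 * s * M = 1 + 2 * s' * M" using pi_neq_zero by (metis mult_left_cancel of_nat_eq_iff)
    then show "s = s'" using Mpos by simp
  qed
  have "range tn \<subseteq> {x. poly (p js Dm) x = 0}" using roots by auto
  moreover have "infinite (range tn)" using inj by (simp add: range_inj_infinite)
  ultimately have "infinite {x. poly (p js Dm) x = 0}" using finite_subset by blast
  then show False using poly_roots_finite pDm by blast
qed


lemma sigmoid_has_deriv:
  "(sigmoid has_real_derivative sigmoid x * (1 - sigmoid x)) (at x)"
proof -
  have pos: "1 + exp (- x) \<noteq> 0" by (smt (verit) exp_gt_zero)
  have "((\<lambda>x. 1 / (1 + exp (- x))) has_real_derivative exp (- x) / (1 + exp (- x))^2) (at x)"
    using pos by (auto intro!: derivative_eq_intros simp: power2_eq_square field_simps)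
  moreover have "exp (- x) / (1 + exp (- x))^2 = sigmoid x * (1 - sigmoid x)"
    using pos by (simp add: sigmoid_def power2_eq_square field_simps)
  ultimately show ?thesis by (simp add: sigmoid_def[abs_def])
qed

primrec Rseq :: "real \<Rightarrow> real poly \<Rightarrow> nat \<Rightarrow> real poly" where
  "Rseq c Q 0 = Q"
| "Rseq c Q (Suc k) = smult c (pderiv (Rseq c Q k) * [:0, 1, -1:])"

lemma poly_sig_deriv:
  "((\<lambda>x. poly Q (sigmoid (c * x))) has_real_derivative
     poly (smult c (pderiv Q * [:0, 1, -1:])) (sigmoid (c * x))) (at x)"
proof -
  have d1: "((\<lambda>x. sigmoid (c * x)) has_real_derivative (sigmoid (c * x) * (1 - sigmoid (c * x))) * c) (at x)"
    by (rule DERIV_chain2[OF sigmoid_has_deriv]) (auto intro!: derivative_eq_intros)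
  have "((\<lambda>x. poly Q (sigmoid (c * x))) has_real_derivative
      poly (pderiv Q) (sigmoid (c * x)) * ((sigmoid (c * x) * (1 - sigmoid (c * x))) * c)) (at x)"
    by (rule DERIV_chain2[OF poly_DERIV d1])
  moreover have "poly (pderiv Q) (sigmoid (c * x)) * ((sigmoid (c * x) * (1 - sigmoid (c * x))) * c)
      = poly (smult c (pderiv Q * [:0, 1, -1:])) (sigmoid (c * x))"
    by (simp add: algebra_simps)
  ultimately show ?thesis by simp
qed

lemma deriv_iter_sig:
  "(deriv ^^ k) (\<lambda>x. poly Q (sigmoid (c * x))) = (\<lambda>x. poly (Rseq c Q k) (sigmoid (c * x)))"
proof (induction k)
  case 0
  then show ?case by simp
next
  case (Suc k)
  have "(deriv ^^ Suc k) (\<lambda>x. poly Q (sigmoid (c * x))) = deriv (\<lambda>x. poly (Rseq c Q k) (sigmoid (c * x)))"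
    using Suc by simp
  also have "\<dots> = (\<lambda>x. poly (Rseq c Q (Suc k)) (sigmoid (c * x)))"
    by (rule ext, simp only: Rseq.simps, rule DERIV_imp_deriv[OF poly_sig_deriv])
  finally show ?case .
qed

lemma degree_Rseq:
  assumes "c \<noteq> 0" "degree Q = 1"
  shows "degree (Rseq c Q k) = k + 1"
proof (induction k)
  case 0
  then show ?case using assms by simp
next
  case (Suc k)
  have pd: "pderiv (Rseq c Q k) \<noteq> 0" using Suc by (simp add: pderiv_eq_0_iff)
  have "degree (Rseq c Q (Suc k)) = degree (pderiv (Rseq c Q k) * [:0, 1, -1:])"
    using assms(1) by simp
  also have "\<dots> = degree (pderiv (Rseq c Q k)) + degree [:0, 1, -1::real:]"
    using pd by (intro degree_mult_eq) auto
  also have "\<dots> = k + 2" using Suc by (simp add: degree_pderiv)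
  finally show ?case by simp
qed

lemma differentiable_iter_sig:
  "(deriv ^^ k) (\<lambda>x. poly Q (sigmoid (c * x))) differentiable_on UNIV"
  unfolding deriv_iter_sig
  using poly_sig_deriv real_differentiable_def
  by (metis differentiable_at_withinI differentiable_on_def)

lemma sigmoid_repr: "sigmoid = (\<lambda>x. poly [:0, 1:] (sigmoid (1 * x)))"
  by auto

lemma tanh_repr: "tanh = (\<lambda>x. poly [:-1, 2:] (sigmoid (2 * x)))"
proof
  fix x :: real
  have pos: "1 + exp (- 2 * x) \<noteq> 0" by (smt (verit) exp_gt_zero)
  show "tanh x = poly [:-1, 2:] (sigmoid (2 * x))"
    unfolding tanh_real_altdef sigmoid_def using pos by (simp add: field_simps)
qed

lemma psi_repr:
  assumes "\<psi> = sigmoid \<or> \<psi> = tanh"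
  obtains c Q where "c \<noteq> 0" "degree Q = 1" "\<psi> = (\<lambda>x. poly Q (sigmoid (c * x)))"
proof -
  have "degree [:0, 1::real:] = 1" "degree [:-1, 2::real:] = 1" by simp_all
  then show ?thesis using that assms sigmoid_repr tanh_repr
    by (metis one_neq_zero zero_neq_numeral)
qed

lemma sigmoid_odd: "sigmoid (- x) = 1 - sigmoid x"
proof -
  have pos: "1 + exp (- x) \<noteq> 0" "1 + exp x \<noteq> 0" by (smt (verit) exp_gt_zero)+
  have "exp x * exp (- x) = 1" by (simp add: exp_minus_inverse)
  then show ?thesis using pos unfolding sigmoid_def by (simp add: field_simps)
qed



lemma open_box:
  assumes "openin (product_topology (\<lambda>_. euclideanreal) V0) U" "x0 \<in> U" "finite V0"
  shows "\<exists>\<epsilon>>0. \<forall>y\<in>PiE V0 (\<lambda>_. UNIV). (\<forall>i\<in>V0. \<bar>y i - x0 i\<bar> < \<epsilon>) \<longrightarrow> y \<in> U"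
proof -
  obtain W where W: "\<forall>i\<in>V0. openin euclideanreal (W i)" "x0 \<in> PiE V0 W" "PiE V0 W \<subseteq> U"
    using assms(1,2) unfolding openin_product_topology_alt by blast
  have "\<forall>i\<in>V0. \<exists>e>0. ball (x0 i) e \<subseteq> W i"
  proof
    fix i assume i: "i \<in> V0"
    then have "open (W i)" "x0 i \<in> W i" using W by (auto simp: PiE_iff)
    then show "\<exists>e>0. ball (x0 i) e \<subseteq> W i" using open_contains_ball by blast
  qed
  then obtain e where e: "\<forall>i\<in>V0. e i > 0 \<and> ball (x0 i) (e i) \<subseteq> W i" by metis
  define \<epsilon> where "\<epsilon> = Min (insert 1 (e ` V0))"
  have fin: "finite (insert 1 (e ` V0))" using assms(3) by simp
  have epos: "\<epsilon> > 0" unfolding \<epsilon>_def using fin e by (subst Min_gr_iff) auto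
  have ele: "\<epsilon> \<le> e i" if "i \<in> V0" for i unfolding \<epsilon>_def using fin that by (intro Min_le) auto
  show ?thesis
  proof (intro exI[of _ \<epsilon>] conjI epos ballI impI)
    fix y assume y: "y \<in> PiE V0 (\<lambda>_. UNIV)" "\<forall>i\<in>V0. \<bar>y i - x0 i\<bar> < \<epsilon>"
    have "y \<in> PiE V0 W"
    proof (rule PiE_I)
      fix i assume i: "i \<in> V0"
      then have "\<bar>y i - x0 i\<bar> < e i" using y(2) ele[OF i] by force
      then have "y i \<in> ball (x0 i) (e i)" by (simp add: dist_real_def abs_minus_commute)
      then show "y i \<in> W i" using e i by blast
    next
      fix i assume "i \<notin> V0" then show "y i = undefined" using y(1) by (auto simp: PiE_iff extensional_def)
    qed
    then show "y \<in> U" using W(3) by blast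
  qed
qed

lemma avoid_hyperplanes:
  fixes F :: "('v \<Rightarrow> real) set"
  assumes "finite F" "\<forall>u\<in>F. \<exists>i\<in>V. u i \<noteq> 0" "finite V"
  shows "\<exists>v::'v\<Rightarrow>real. \<forall>u\<in>F. (\<Sum>i\<in>V. u i * v i) \<noteq> 0"
  using assms(1,2)
proof (induction F rule: finite_induct)
  case empty
  then show ?case by simp
next
  case (insert u F)
  then obtain v where v: "\<forall>f\<in>F. (\<Sum>i\<in>V. f i * v i) \<noteq> 0" by auto
  show ?case
  proof (cases "(\<Sum>i\<in>V. u i * v i) = 0")
    case False
    then show ?thesis using v by (intro exI[of _ v]) auto
  next
    case True
    obtain i0 where i0: "i0 \<in> V" "u i0 \<noteq> 0" using insert.prems by auto
    define nu where "nu = (\<Sum>i\<in>V. u i * u i)"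
    have "nu > 0" unfolding nu_def
      using i0 assms(3) by (intro sum_pos2[of _ i0]) (auto simp: not_square_less_zero zero_less_mult_iff)
    define bad where "bad = insert 0 ((\<lambda>f. - (\<Sum>i\<in>V. f i * v i) / (\<Sum>i\<in>V. f i * u i)) ` F)"
    have "finite bad" using insert.hyps(1) by (simp add: bad_def)
    then obtain t :: real where t: "t \<notin> bad" using ex_new_if_finite infinite_UNIV_char_0 by blast
    define v' where "v' i = v i + t * u i" for i
    have sumv': "(\<Sum>i\<in>V. f i * v' i) = (\<Sum>i\<in>V. f i * v i) + t * (\<Sum>i\<in>V. f i * u i)" for f
      unfolding v'_def by (simp add: algebra_simps sum.distrib sum_distrib_left)
    show ?thesis
    proof (intro exI[of _ v'] ballI)
      fix f assume f: "f \<in> insert u F"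
      show "(\<Sum>i\<in>V. f i * v' i) \<noteq> 0"
      proof (cases "f = u")
        case True
        have "t \<noteq> 0" using t by (simp add: bad_def)
        then show ?thesis using True \<open>(\<Sum>i\<in>V. u i * v i) = 0\<close> \<open>nu > 0\<close> sumv'[of u]
          by (simp add: nu_def)
      next
        case False
        then have fF: "f \<in> F" using f by simp
        show ?thesis
        proof (cases "(\<Sum>i\<in>V. f i * u i) = 0")
          case True
          then show ?thesis using sumv'[of f] v fF by simp
        next
          case False
          have "t \<noteq> - (\<Sum>i\<in>V. f i * v i) / (\<Sum>i\<in>V. f i * u i)" using t fF by (auto simp: bad_def)
          then show ?thesis using sumv'[of f] False by (auto simp: field_simps)
        qed
      qed
    qed
  qed
qed

lemma univariate_zero:
  fixes g :: "nat \<Rightarrow> real"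
  assumes "\<epsilon> > 0" "\<forall>s. \<bar>s - s0\<bar> < \<epsilon> \<longrightarrow> (\<Sum>e\<le>d. s ^ e * g e) = 0"
  shows "\<forall>e\<le>d. g e = 0"
proof -
  define p where "p = (\<Sum>e\<le>d. monom (g e) e)"
  have pv: "poly p s = (\<Sum>e\<le>d. s ^ e * g e)" for s
    unfolding p_def by (simp add: poly_sum poly_monom mult.commute)
  have cf: "coeff p e = g e" if "e \<le> d" for e
    unfolding p_def using that by (simp add: coeff_sum coeff_monom)
  have "{s0 - \<epsilon><..<s0 + \<epsilon>} \<subseteq> {s. poly p s = 0}"
    using assms(2) pv by (auto simp: abs_less_iff)
  moreover have "infinite {s0 - \<epsilon><..<s0 + \<epsilon>}"
    using assms(1) uncountable_open_interval[of "s0 - \<epsilon>" "s0 + \<epsilon>"] countable_finite by auto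
  ultimately have "p = 0" using poly_roots_finite finite_subset by blast
  then show ?thesis using cf by (metis coeff_0)
qed



lemma poly_eval_cong:
  assumes "\<forall>i\<in>V. y i = y' i"
  shows "poly_eval V d c y = poly_eval V d c y'"
  unfolding poly_eval_def using assms by (intro sum.cong refl arg_cong2[where f="(*)"] prod.cong) auto

lemma finite_multi_idx: "finite V \<Longrightarrow> finite (multi_idx V d)"
  unfolding multi_idx_def
  by (rule finite_subset[OF _ finite_PiE[of V "\<lambda>_. {..d}"]]) auto

lemma multi_idx_empty: "multi_idx {} d = {\<lambda>_. undefined}"
  unfolding multi_idx_def by auto

lemma poly_eval_insert:
  assumes "finite V" "a \<notin> V"
  shows "poly_eval (insert a V) d c y =
    (\<Sum>e\<le>d. y a ^ e * poly_eval V (d - e) (\<lambda>\<beta>. c (\<beta>(a := e))) y)"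
proof -
  have "(\<Sum>e\<le>d. y a ^ e * poly_eval V (d - e) (\<lambda>\<beta>. c (\<beta>(a := e))) y)
      = (\<Sum>e\<le>d. \<Sum>\<beta>\<in>multi_idx V (d - e). y a ^ e * (c (\<beta>(a := e)) * (\<Prod>i\<in>V. y i ^ \<beta> i)))"
    unfolding poly_eval_def by (simp add: sum_distrib_left)
  also have "\<dots> = (\<Sum>(e, \<beta>)\<in>Sigma {..d} (\<lambda>e. multi_idx V (d - e)). y a ^ e * (c (\<beta>(a := e)) * (\<Prod>i\<in>V. y i ^ \<beta> i)))"
    by (rule sum.Sigma) (auto simp: finite_multi_idx assms(1))
  also have "\<dots> = poly_eval (insert a V) d c y"
    unfolding poly_eval_def
  proof (rule sum.reindex_bij_witness[where i = "\<lambda>\<alpha>. (\<alpha> a, \<alpha>(a := undefined))" and j = "\<lambda>(e, \<beta>). \<beta>(a := e)"])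
    fix \<alpha> assume \<alpha>: "\<alpha> \<in> multi_idx (insert a V) d"
    have ext: "\<alpha> \<in> extensional (insert a V)" and bd: "sum \<alpha> (insert a V) \<le> d"
      using \<alpha> by (auto simp: multi_idx_def PiE_iff)
    have sumins: "sum \<alpha> (insert a V) = \<alpha> a + sum \<alpha> V" using assms by simp
    have sumV: "sum (\<alpha>(a := undefined)) V = sum \<alpha> V" using assms(2) by (intro sum.cong) auto
    show "(case (\<alpha> a, \<alpha>(a := undefined)) of (e, \<beta>) \<Rightarrow> \<beta>(a := e)) = \<alpha>" by simp
    have "\<alpha> i \<le> d - \<alpha> a" if "i \<in> V" for i
    proof -
      have "\<alpha> i \<le> sum \<alpha> V" using that assms(1) by (intro member_le_sum) auto
      then show ?thesis using bd sumins by linarith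
    qed
    then have "\<alpha>(a := undefined) \<in> multi_idx V (d - \<alpha> a)"
      unfolding multi_idx_def using ext sumV bd sumins assms(2)
      by (auto simp: PiE_iff extensional_def)
    moreover have "\<alpha> a \<le> d" using bd sumins by linarith
    ultimately show "(\<alpha> a, \<alpha>(a := undefined)) \<in> Sigma {..d} (\<lambda>e. multi_idx V (d - e))" by simp
  next
    fix p assume p: "p \<in> Sigma {..d} (\<lambda>e. multi_idx V (d - e))"
    obtain e \<beta> where eb: "p = (e, \<beta>)" by fastforce
    have e: "e \<le> d" and \<beta>: "\<beta> \<in> multi_idx V (d - e)" using p eb by auto
    have bext: "\<beta> \<in> extensional V" using \<beta> by (auto simp: multi_idx_def PiE_iff)
    then have ba: "\<beta> a = undefined" using assms(2) by (simp add: extensional_def)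
    show "(\<lambda>\<alpha>. (\<alpha> a, \<alpha>(a := undefined))) (case p of (e, \<beta>) \<Rightarrow> \<beta>(a := e)) = p"
      using eb ba by auto
    have sumV: "sum (\<beta>(a := e)) V = sum \<beta> V" using assms(2) by (intro sum.cong) auto
    have "sum (\<beta>(a := e)) (insert a V) = e + sum \<beta> V" using assms sumV by simp
    moreover have "sum \<beta> V \<le> d - e" using \<beta> by (simp add: multi_idx_def)
    ultimately have s: "sum (\<beta>(a := e)) (insert a V) \<le> d" using e by linarith
    have "\<beta> i \<le> d" if "i \<in> V" for i using \<beta> that by (auto simp: multi_idx_def PiE_iff)
    then show "(case p of (e, \<beta>) \<Rightarrow> \<beta>(a := e)) \<in> multi_idx (insert a V) d"
      using eb e s bext unfolding multi_idx_def by (auto simp: PiE_iff extensional_def)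
    have "(\<Prod>i\<in>insert a V. y i ^ (\<beta>(a := e)) i) = y a ^ e * (\<Prod>i\<in>V. y i ^ (\<beta>(a := e)) i)"
      using assms by simp
    moreover have "(\<Prod>i\<in>V. y i ^ (\<beta>(a := e)) i) = (\<Prod>i\<in>V. y i ^ \<beta> i)"
      using assms(2) by (intro prod.cong) auto
    ultimately show "c (case p of (e, \<beta>) \<Rightarrow> \<beta>(a := e)) * (\<Prod>i\<in>insert a V. y i ^ (case p of (e, \<beta>) \<Rightarrow> \<beta>(a := e)) i)
       = (case p of (e, \<beta>) \<Rightarrow> y a ^ e * (c (\<beta>(a := e)) * (\<Prod>i\<in>V. y i ^ \<beta> i)))"
      using eb by simp
  qed
  finally show ?thesis by simp
qed

lemma poly_eval_zero_box:
  assumes "finite V" "\<epsilon> > 0"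
    and "\<forall>y\<in>PiE V (\<lambda>_. UNIV). (\<forall>i\<in>V. \<bar>y i - x0 i\<bar> < \<epsilon>) \<longrightarrow> poly_eval V d c y = 0"
  shows "\<forall>\<alpha>\<in>multi_idx V d. c \<alpha> = 0"
  using assms(1,3)
proof (induction V arbitrary: d c rule: finite_induct)
  case empty
  have "poly_eval {} d c (\<lambda>_. undefined) = 0" using empty by simp
  then show ?case by (simp add: multi_idx_empty poly_eval_def)
next
  case (insert a V)
  define ce where "ce e = (\<lambda>\<beta>. c (\<beta>(a := e)))" for e
  have gz: "\<forall>e\<le>d. poly_eval V (d - e) (ce e) y' = 0"
    if y': "y' \<in> PiE V (\<lambda>_. UNIV)" "\<forall>i\<in>V. \<bar>y' i - x0 i\<bar> < \<epsilon>" for y'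
  proof (rule univariate_zero[OF assms(2), of "x0 a"], intro allI impI)
    fix s assume s: "\<bar>s - x0 a\<bar> < \<epsilon>"
    define y where "y = y'(a := s)"
    have yP: "y \<in> PiE (insert a V) (\<lambda>_. UNIV)" using y'(1) by (auto simp: y_def PiE_iff extensional_def)
    have yb: "\<forall>i\<in>insert a V. \<bar>y i - x0 i\<bar> < \<epsilon>" using y'(2) s by (auto simp: y_def)
    have "poly_eval (insert a V) d c y = 0" using insert.prems yP yb by blast
    moreover have "poly_eval V (d - e) (ce e) y = poly_eval V (d - e) (ce e) y'" for e
      using insert.hyps(2) by (intro poly_eval_cong) (auto simp: y_def)
    ultimately show "(\<Sum>e\<le>d. s ^ e * poly_eval V (d - e) (ce e) y') = 0"
      using poly_eval_insert[OF insert.hyps(1,2)] by (simp add: y_def ce_def)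
  qed
  have cz: "\<forall>\<beta>\<in>multi_idx V (d - e). ce e \<beta> = 0" if "e \<le> d" for e
    using gz that by (intro insert.IH) blast
  show ?case
  proof
    fix \<alpha> assume \<alpha>: "\<alpha> \<in> multi_idx (insert a V) d"
    have ext: "\<alpha> \<in> extensional (insert a V)" and bd: "sum \<alpha> (insert a V) \<le> d"
      using \<alpha> by (auto simp: multi_idx_def PiE_iff)
    have sumins: "sum \<alpha> (insert a V) = \<alpha> a + sum \<alpha> V" using insert.hyps by simp
    have sumV: "sum (\<alpha>(a := undefined)) V = sum \<alpha> V" using insert.hyps(2) by (intro sum.cong) auto
    have "\<alpha> i \<le> d - \<alpha> a" if "i \<in> V" for i
    proof -
      have "\<alpha> i \<le> sum \<alpha> V" using that insert.hyps(1) by (intro member_le_sum) auto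
      then show ?thesis using bd sumins by linarith
    qed
    then have "\<alpha>(a := undefined) \<in> multi_idx V (d - \<alpha> a)"
      unfolding multi_idx_def using ext sumV bd sumins insert.hyps(2)
      by (auto simp: PiE_iff extensional_def)
    moreover have "\<alpha> a \<le> d" using bd sumins by linarith
    ultimately have "ce (\<alpha> a) (\<alpha>(a := undefined)) = 0" using cz by blast
    then show "c \<alpha> = 0" by (simp add: ce_def)
  qed
qed



definition lpoly :: "'v set \<Rightarrow> nat \<Rightarrow> (('v \<Rightarrow> nat) \<Rightarrow> real) \<Rightarrow> ('v \<Rightarrow> real) \<Rightarrow> ('v \<Rightarrow> real) \<Rightarrow> complex poly" where
  "lpoly V d c x v = (\<Sum>\<alpha>\<in>multi_idx V d. smult (of_real (c \<alpha>)) (\<Prod>i\<in>V. [:of_real (x i), of_real (v i):] ^ \<alpha> i))"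

lemma lpoly_eval:
  "poly (lpoly V d c x v) (of_real t) = of_real (poly_eval V d c (\<lambda>i. x i + t * v i))"
  unfolding lpoly_def poly_eval_def
  by (simp add: poly_sum poly_prod poly_power of_real_sum of_real_prod algebra_simps)

lemma lpoly_0: "poly (lpoly V d c x v) 0 = of_real (poly_eval V d c x)"
  using lpoly_eval[of V d c x v 0] by simp

lemma poly_expand:
  fixes p :: "real poly"
  assumes "degree p \<le> N"
  shows "poly p y = (\<Sum>e\<le>N. coeff p e * y ^ e)"
proof -
  have "poly p y = (\<Sum>e\<le>degree p. coeff p e * y ^ e)" by (simp add: poly_altdef)
  also have "\<dots> = (\<Sum>e\<le>N. coeff p e * y ^ e)"
    using assms by (intro sum.mono_neutral_left) (auto simp: coeff_eq_0)
  finally show ?thesis .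
qed

lemma sum_atMost_split0: "(\<Sum>e\<le>(N::nat). f e) = f 0 + (\<Sum>e\<in>{1..N}. f e)"
proof -
  have "{..N} = insert 0 {1..N}"
  proof (rule set_eqI)
    fix x show "x \<in> {..N} \<longleftrightarrow> x \<in> insert 0 {1..N}" by (cases x) auto
  qed
  then show ?thesis by simp
qed

lemma triangular:
  fixes R :: "nat \<Rightarrow> real poly" and C :: "nat \<Rightarrow> real"
  assumes deg: "\<forall>k\<le>n. degree (R k) = k + 1"
    and eqs: "\<forall>e\<in>{1..n+1}. (\<Sum>k\<le>n. coeff (R k) e * C k) = 0"
  shows "\<forall>k\<le>n. C k = 0"
proof -
  have "C (n - i) = 0" if "i \<le> n" for i
    using that
  proof (induction i rule: less_induct)
    case (less i)
    define k0 where "k0 = n - i"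
    have k0n: "k0 \<le> n" by (simp add: k0_def)
    have z: "coeff (R k) (k0 + 1) * C k = 0" if "k \<le> n" "k \<noteq> k0" for k
    proof (cases "k < k0")
      case True
      then have "coeff (R k) (k0 + 1) = 0" using deg that by (intro coeff_eq_0) auto
      then show ?thesis by simp
    next
      case False
      then have "k > k0" using that by simp
      then have "n - k < i" "k = n - (n - k)" using that k0_def less.prems by auto
      then have "C k = 0" using less.IH[of "n - k"] by auto
      then show ?thesis by simp
    qed
    have "(\<Sum>k\<le>n. coeff (R k) (k0 + 1) * C k) = coeff (R k0) (k0 + 1) * C k0 + (\<Sum>k\<in>{..n}-{k0}. coeff (R k) (k0 + 1) * C k)"
      by (rule sum.remove) (use k0n in auto)
    moreover have "(\<Sum>k\<in>{..n}-{k0}. coeff (R k) (k0 + 1) * C k) = 0"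
      using z by (intro sum.neutral) auto
    ultimately have "(\<Sum>k\<le>n. coeff (R k) (k0 + 1) * C k) = coeff (R k0) (k0 + 1) * C k0" by simp
    moreover have "(\<Sum>k\<le>n. coeff (R k) (k0 + 1) * C k) = 0" using eqs k0n by auto
    moreover have "coeff (R k0) (k0 + 1) \<noteq> 0"
      using deg k0n by (metis leading_coeff_0_iff degree_0 add_eq_0_iff_both_eq_0 one_neq_zero)
    ultimately show ?case by (simp add: k0_def)
  qed
  then show ?thesis by (metis diff_diff_cancel diff_le_self)
qed



lemma csig_real: "csig (of_real r) = of_real (sigmoid r)"
  unfolding csig_def sigmoid_def by (simp flip: exp_of_real)

lemma real_nonpole: "1 + exp (-(of_real A * of_real r + of_real B)) \<noteq> (0::complex)"
proof -
  have "1 + exp (-(of_real A * of_real r + of_real B)) = (of_real (1 + exp (-(A * r + B))) :: complex)"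
    by (simp flip: exp_of_real)
  moreover have "1 + exp (-(A * r + B)) > 0" by (smt (verit) exp_gt_zero)
  ultimately show ?thesis by (metis of_real_eq_0_iff less_irrefl)
qed

lemma inner_expand:
  fixes R :: "nat \<Rightarrow> real poly" and P :: "nat \<Rightarrow> real"
  assumes "\<forall>k\<le>n. degree (R k) = k + 1"
  shows "(\<Sum>k\<le>n. P k * poly (R k) s) =
     (\<Sum>k\<le>n. coeff (R k) 0 * P k) + (\<Sum>e\<in>{1..n+1}. (\<Sum>k\<le>n. coeff (R k) e * P k) * s ^ e)"
proof -
  have "(\<Sum>k\<le>n. P k * poly (R k) s) = (\<Sum>k\<le>n. \<Sum>e\<le>n+1. P k * (coeff (R k) e * s ^ e))"
  proof (intro sum.cong refl)
    fix k assume "k \<in> {..n}"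
    then have "degree (R k) \<le> n + 1" using assms by simp
    then show "P k * poly (R k) s = (\<Sum>e\<le>n+1. P k * (coeff (R k) e * s ^ e))"
      by (subst poly_expand[of _ "n+1"]) (simp_all only: sum_distrib_left)
  qed
  also have "\<dots> = (\<Sum>e\<le>n+1. \<Sum>k\<le>n. P k * (coeff (R k) e * s ^ e))" by (rule sum.swap)
  also have "\<dots> = (\<Sum>e\<le>n+1. (\<Sum>k\<le>n. coeff (R k) e * P k) * s ^ e)"
    by (intro sum.cong refl) (simp add: sum_distrib_right sum_distrib_left mult_ac)
  also have "\<dots> = (\<Sum>k\<le>n. coeff (R k) 0 * P k) + (\<Sum>e\<in>{1..n+1}. (\<Sum>k\<le>n. coeff (R k) e * P k) * s ^ e)"
    by (subst sum_atMost_split0) simp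
  finally show ?thesis .
qed



lemma point_zero:
  fixes V0 V1 :: "'v set" and w :: "'v \<times> 'v \<Rightarrow> real" and \<beta> :: "'v \<Rightarrow> real" and Q :: "real poly"
    and c :: "'v \<Rightarrow> nat \<Rightarrow> ('v \<Rightarrow> nat) \<Rightarrow> real" and cE :: "('v \<Rightarrow> nat) \<Rightarrow> real"
    and m :: "nat \<Rightarrow> nat"
  assumes fin0: "finite V0" and fin1: "finite V1" and cc: "cc \<noteq> 0" and dQ: "degree Q = 1"
    and wnz: "\<forall>j\<in>V1. \<exists>i\<in>V0. w (i, j) \<noteq> 0"
    and dst: "\<forall>i\<in>V1. \<forall>j\<in>V1. i \<noteq> j \<longrightarrow> \<not> ((\<forall>l\<in>V0. w (l, i) = w (l, j)) \<and> \<beta> i = \<beta> j) \<and>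
                 \<not> ((\<forall>l\<in>V0. w (l, i) = - w (l, j)) \<and> \<beta> i = - \<beta> j)"
    and epos: "\<epsilon> > 0"
    and eq: "\<forall>y\<in>PiE V0 (\<lambda>_. UNIV). (\<forall>i\<in>V0. \<bar>y i - x0 i\<bar> < \<epsilon>) \<longrightarrow>
        poly_eval V0 mE cE y + (\<Sum>j\<in>V1. \<Sum>k\<le>n. poly_eval V0 (m k) (c j k) y *
          poly (Rseq cc Q k) (sigmoid (cc * preact V0 w \<beta> j y))) = 0"
    and xB: "\<forall>i\<in>V0. \<bar>x i - x0 i\<bar> < \<epsilon>"
  shows "\<forall>j\<in>V1. \<forall>k\<le>n. poly_eval V0 (m k) (c j k) x = 0"
proof -
  define F1 where "F1 = (\<lambda>j. \<lambda>l. w (l, j)) ` V1"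
  define F2 where "F2 = (\<lambda>(i, j). \<lambda>l. w (l, i) - w (l, j)) ` {(i, j). i \<in> V1 \<and> j \<in> V1 \<and> (\<exists>l\<in>V0. w (l, i) \<noteq> w (l, j))}"
  define F3 where "F3 = (\<lambda>(i, j). \<lambda>l. w (l, i) + w (l, j)) ` {(i, j). i \<in> V1 \<and> j \<in> V1 \<and> (\<exists>l\<in>V0. w (l, i) \<noteq> - w (l, j))}"
  have finF: "finite (F1 \<union> F2 \<union> F3)"
  proof -
    have "{(i, j). i \<in> V1 \<and> j \<in> V1 \<and> (\<exists>l\<in>V0. w (l, i) \<noteq> w (l, j))} \<subseteq> V1 \<times> V1" by auto
    moreover have "{(i, j). i \<in> V1 \<and> j \<in> V1 \<and> (\<exists>l\<in>V0. w (l, i) \<noteq> - w (l, j))} \<subseteq> V1 \<times> V1" by auto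
    ultimately show ?thesis unfolding F1_def F2_def F3_def using fin1
      by (meson finite_Un finite_SigmaI finite_imageI finite_subset)
  qed
  have Fnz: "\<forall>u\<in>F1 \<union> F2 \<union> F3. \<exists>i\<in>V0. u i \<noteq> 0"
    unfolding F1_def F2_def F3_def using wnz by (auto simp: add_eq_0_iff) (metis minus_equation_iff)
  obtain v where v: "\<forall>u\<in>F1 \<union> F2 \<union> F3. (\<Sum>i\<in>V0. u i * v i) \<noteq> 0"
    using avoid_hyperplanes[OF finF Fnz fin0] by blast
  define a where "a j = cc * (\<Sum>i\<in>V0. w (i, j) * v i)" for j
  define b where "b j = cc * preact V0 w \<beta> j x" for j
  have anz: "\<forall>j\<in>V1. a j \<noteq> 0"
  proof
    fix j assume "j \<in> V1"
    then have "(\<lambda>l. w (l, j)) \<in> F1 \<union> F2 \<union> F3" by (simp add: F1_def)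
    then show "a j \<noteq> 0" using v cc by (auto simp: a_def)
  qed
  have pre_diff: "preact V0 w \<beta> i x - preact V0 w \<beta> j x = \<beta> i - \<beta> j + (\<Sum>l\<in>V0. x l * (w (l, i) - w (l, j)))" for i j
    by (simp add: preact_def sum_subtractf algebra_simps)
  have pre_sum: "preact V0 w \<beta> i x + preact V0 w \<beta> j x = \<beta> i + \<beta> j + (\<Sum>l\<in>V0. x l * (w (l, i) + w (l, j)))" for i j
    by (simp add: preact_def sum.distrib algebra_simps)
  have dist_ab: "\<forall>i\<in>V1. \<forall>j\<in>V1. i \<noteq> j \<longrightarrow> \<not> (a i = a j \<and> b i = b j) \<and> \<not> (a i = - a j \<and> b i = - b j)"
  proof (intro ballI impI conjI notI)
    fix i j assume ij: "i \<in> V1" "j \<in> V1" "i \<noteq> j" and ab: "a i = a j \<and> b i = b j"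
    show False
    proof (cases "\<exists>l\<in>V0. w (l, i) \<noteq> w (l, j)")
      case True
      then have "(\<lambda>l. w (l, i) - w (l, j)) \<in> F1 \<union> F2 \<union> F3" using ij unfolding F2_def
        by (intro UnI1 UnI2 image_eqI[where x="(i, j)"]) auto
      from v[rule_format, OF this] have "(\<Sum>l\<in>V0. (w (l, i) - w (l, j)) * v l) \<noteq> 0" by simp
      moreover have "a i - a j = cc * (\<Sum>l\<in>V0. (w (l, i) - w (l, j)) * v l)"
        by (simp add: a_def algebra_simps sum_subtractf)
      ultimately show False using ab cc by simp
    next
      case False
      then have "(\<Sum>l\<in>V0. x l * (w (l, i) - w (l, j))) = 0" by simp
      moreover have "preact V0 w \<beta> i x = preact V0 w \<beta> j x" using ab cc by (simp add: b_def)
      ultimately have "\<beta> i = \<beta> j" using pre_diff[of i j] by simp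
      then show False using dst ij False by blast
    qed
  next
    fix i j assume ij: "i \<in> V1" "j \<in> V1" "i \<noteq> j" and ab: "a i = - a j \<and> b i = - b j"
    show False
    proof (cases "\<exists>l\<in>V0. w (l, i) \<noteq> - w (l, j)")
      case True
      then have "(\<lambda>l. w (l, i) + w (l, j)) \<in> F1 \<union> F2 \<union> F3" using ij unfolding F3_def
        by (intro UnI2 image_eqI[where x="(i, j)"]) auto
      from v[rule_format, OF this] have "(\<Sum>l\<in>V0. (w (l, i) + w (l, j)) * v l) \<noteq> 0" by simp
      moreover have "a i + a j = cc * (\<Sum>l\<in>V0. (w (l, i) + w (l, j)) * v l)"
        by (simp add: a_def algebra_simps sum.distrib)
      ultimately show False using ab cc by simp
    next
      case False
      then have "(\<Sum>l\<in>V0. x l * (w (l, i) + w (l, j))) = 0" by simp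
      moreover have "preact V0 w \<beta> i x = - preact V0 w \<beta> j x"
      proof -
        have "cc * preact V0 w \<beta> i x = cc * (- preact V0 w \<beta> j x)" using ab by (simp add: b_def)
        then show ?thesis using cc by (metis mult_left_cancel)
      qed
      ultimately have "\<beta> i = - \<beta> j" using pre_sum[of i j] by simp
      then show False using dst ij False by blast
    qed
  qed
  define \<rho> where "\<rho> = Min (insert \<epsilon> ((\<lambda>i. \<epsilon> - \<bar>x i - x0 i\<bar>) ` V0))"
  have finR: "finite (insert \<epsilon> ((\<lambda>i. \<epsilon> - \<bar>x i - x0 i\<bar>) ` V0))" using fin0 by simp
  have \<rho>pos: "\<rho> > 0" unfolding \<rho>_def using finR epos xB by (subst Min_gr_iff) auto
  have \<rho>le: "\<rho> \<le> \<epsilon> - \<bar>x i - x0 i\<bar>" if "i \<in> V0" for i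
    unfolding \<rho>_def using finR that by (intro Min_le) auto
  define K where "K = 1 + (\<Sum>i\<in>V0. \<bar>v i\<bar>)"
  have Kpos: "K > 0" unfolding K_def by (smt (verit) sum_nonneg abs_ge_zero)
  have vle: "\<bar>v i\<bar> \<le> K" if "i \<in> V0" for i
  proof -
    have "\<bar>v i\<bar> \<le> (\<Sum>i\<in>V0. \<bar>v i\<bar>)" using fin0 that by (intro member_le_sum) auto
    then show ?thesis by (simp add: K_def)
  qed
  define \<delta> where "\<delta> = \<rho> / K"
  have \<delta>pos: "\<delta> > 0" using \<rho>pos Kpos by (simp add: \<delta>_def)
  define pt where "pt t = (\<lambda>i. if i \<in> V0 then x i + t * v i else undefined)" for t
  have ptP: "pt t \<in> PiE V0 (\<lambda>_. UNIV)" for t by (auto simp: pt_def PiE_iff extensional_def)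
  have ptB: "\<forall>i\<in>V0. \<bar>pt t i - x0 i\<bar> < \<epsilon>" if t: "\<bar>t\<bar> < \<delta>" for t
  proof
    fix i assume i: "i \<in> V0"
    have "\<bar>t * v i\<bar> = \<bar>t\<bar> * \<bar>v i\<bar>" by (simp add: abs_mult)
    also have "\<dots> \<le> \<bar>t\<bar> * K" using vle[OF i] by (simp add: mult_left_mono)
    also have "\<dots> < \<delta> * K" using t Kpos by simp
    also have "\<dots> = \<rho>" using Kpos by (simp add: \<delta>_def)
    finally have "\<bar>t * v i\<bar> < \<epsilon> - \<bar>x i - x0 i\<bar>" using \<rho>le[OF i] by simp
    then show "\<bar>pt t i - x0 i\<bar> < \<epsilon>" using i by (simp add: pt_def)
  qed
  have pre_line: "cc * preact V0 w \<beta> j (pt t) = b j + a j * t" for j t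
  proof -
    have "preact V0 w \<beta> j (pt t) = \<beta> j + (\<Sum>i\<in>V0. (x i + t * v i) * w (i, j))"
      unfolding preact_def by (simp add: pt_def)
    also have "\<dots> = preact V0 w \<beta> j x + t * (\<Sum>i\<in>V0. w (i, j) * v i)"
      by (simp add: preact_def algebra_simps sum.distrib sum_distrib_left)
    finally show ?thesis by (simp add: a_def b_def algebra_simps)
  qed
  define R where "R = Rseq cc Q"
  have degR: "\<forall>k\<le>n. degree (R k) = k + 1" using degree_Rseq[OF cc dQ] by (simp add: R_def)
  define PE where "PE j k t = poly_eval V0 (m k) (c j k) (\<lambda>i. x i + t * v i)" for j k t
  have PEpt: "poly_eval V0 d cf (pt t) = poly_eval V0 d cf (\<lambda>i. x i + t * v i)" for d cf t
    by (rule poly_eval_cong) (simp add: pt_def)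
  have real_eq: "poly_eval V0 mE cE (\<lambda>i. x i + t * v i) + (\<Sum>j\<in>V1. \<Sum>k\<le>n. coeff (R k) 0 * PE j k t)
      + (\<Sum>j\<in>V1. \<Sum>e\<in>{1..n+1}. (\<Sum>k\<le>n. coeff (R k) e * PE j k t) * sigmoid (b j + a j * t) ^ e) = 0"
    if t: "\<bar>t\<bar> < \<delta>" for t
  proof -
    have "poly_eval V0 mE cE (pt t) + (\<Sum>j\<in>V1. \<Sum>k\<le>n. poly_eval V0 (m k) (c j k) (pt t) *
          poly (Rseq cc Q k) (sigmoid (cc * preact V0 w \<beta> j (pt t)))) = 0"
      using eq ptP ptB[OF t] by blast
    then have "poly_eval V0 mE cE (\<lambda>i. x i + t * v i) + (\<Sum>j\<in>V1. \<Sum>k\<le>n. PE j k t * poly (R k) (sigmoid (b j + a j * t))) = 0"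
      by (simp add: PEpt pre_line PE_def R_def)
    moreover have "(\<Sum>k\<le>n. PE j k t * poly (R k) (sigmoid (b j + a j * t))) =
       (\<Sum>k\<le>n. coeff (R k) 0 * PE j k t) + (\<Sum>e\<in>{1..n+1}. (\<Sum>k\<le>n. coeff (R k) e * PE j k t) * sigmoid (b j + a j * t) ^ e)" for j
      by (rule inner_expand[OF degR])
    ultimately show ?thesis by (simp add: sum.distrib add.assoc)
  qed
  define p where "p j e = (\<Sum>k\<le>n. smult (of_real (coeff (R k) e)) (lpoly V0 (m k) (c j k) x v))" for j e
  define q where "q = lpoly V0 mE cE x v + (\<Sum>j\<in>V1. p j 0)"
  have pev: "poly (p j e) (of_real t) = of_real (\<Sum>k\<le>n. coeff (R k) e * PE j k t)" for j e t
    by (simp add: p_def poly_sum lpoly_eval PE_def of_real_sum)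
  define G where "G z = poly q z + (\<Sum>j\<in>V1. \<Sum>e\<in>{1..n+1}. poly (p j e) z *
      csig (of_real (a j) * z + of_real (b j)) ^ e)" for z
  have carg: "of_real (a j) * of_real t + of_real (b j) = (of_real (b j + a j * t) :: complex)" for j t
    by simp
  have Greal: "G (of_real t) = 0" if t: "\<bar>t\<bar> < \<delta>" for t
  proof -
    have "G (of_real t) = of_real (poly_eval V0 mE cE (\<lambda>i. x i + t * v i) + (\<Sum>j\<in>V1. \<Sum>k\<le>n. coeff (R k) 0 * PE j k t)
      + (\<Sum>j\<in>V1. \<Sum>e\<in>{1..n+1}. (\<Sum>k\<le>n. coeff (R k) e * PE j k t) * sigmoid (b j + a j * t) ^ e))"
      unfolding G_def q_def carg csig_real
      by (simp only: poly_add poly_sum pev lpoly_eval of_real_add of_real_sum of_real_mult of_real_power)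
    then show ?thesis by (simp only: real_eq[OF t] of_real_0)
  qed
  define S where "S = {z::complex. \<forall>j\<in>V1. 1 + exp (-(of_real (a j) * z + of_real (b j))) \<noteq> 0}"
  have S_alt: "S = UNIV - {z. \<exists>j\<in>V1. 1 + exp (-(of_real (a j) * z + of_real (b j))) = 0}"
    unfolding S_def by auto
  have openS: "open S"
  proof -
    have "S = (\<Inter>j\<in>V1. {z. 1 + exp (-(of_real (a j) * z + of_real (b j))) \<noteq> 0})"
      unfolding S_def by auto
    moreover have "open {z. 1 + exp (-(of_real (a j) * z + of_real (b j))) \<noteq> (0::complex)}" for j
      by (rule open_Collect_neq) (intro continuous_intros)+
    ultimately show ?thesis using fin1 by (simp add: open_INT)
  qed
  have cP: "countable {z. \<exists>j\<in>V1. 1 + exp (-(of_real (a j) * z + of_real (b j))) = (0::complex)}"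
    by (rule countable_poles[OF fin1 anz])
  have connS: "connected S"
    unfolding S_alt by (rule connected_open_diff_countable[OF _ _ _ cP]) auto
  have holG: "G holomorphic_on S"
    unfolding G_def csig_def
    by (intro holomorphic_intros) (auto simp: S_def)
  define U where "U = (of_real :: real \<Rightarrow> complex) ` {-\<delta><..<\<delta>}"
  have US: "U \<subseteq> S" unfolding U_def S_def using real_nonpole by auto
  have S0: "0 \<in> S" unfolding S_def using real_nonpole[of _ 0] by simp
  have lim0: "0 islimpt U"
  proof (rule islimpt_approachable[THEN iffD2], intro allI impI)
    fix e :: real assume e: "e > 0"
    define r where "r = min \<delta> e / 2"
    have r: "r > 0" "r < \<delta>" "r < e" using e \<delta>pos by (auto simp: r_def)
    show "\<exists>x'\<in>U. x' \<noteq> 0 \<and> dist x' 0 < e"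
      using r by (intro bexI[of _ "of_real r"]) (auto simp: U_def)
  qed
  have GU: "G z = 0" if "z \<in> U" for z
    using that Greal by (auto simp: U_def)
  have G0: "\<forall>z. (\<forall>j\<in>V1. 1 + exp (-(of_real (a j) * z + of_real (b j))) \<noteq> 0) \<longrightarrow> G z = 0"
  proof (intro allI impI)
    fix z :: complex assume "\<forall>j\<in>V1. 1 + exp (-(of_real (a j) * z + of_real (b j))) \<noteq> 0"
    then have zS: "z \<in> S" by (simp add: S_def)
    show "G z = 0" by (rule analytic_continuation[OF holG openS connS US S0 lim0 GU zS])
  qed
  have pz: "\<forall>j\<in>V1. \<forall>e\<in>{1..n+1}. p j e = 0"
    by (rule one_dim[OF fin1 anz dist_ab]) (use G0 in \<open>simp add: G_def\<close>)
  show ?thesis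
  proof (intro ballI allI impI)
    fix j k assume j: "j \<in> V1" and k: "k \<le> n"
    have "\<forall>e\<in>{1..n+1}. (\<Sum>k\<le>n. coeff (R k) e * poly_eval V0 (m k) (c j k) x) = 0"
    proof
      fix e assume e: "e \<in> {1..n+1}"
      have "poly (p j e) (of_real 0) = 0" using pz j e by simp
      then have "(of_real (\<Sum>k\<le>n. coeff (R k) e * PE j k 0) :: complex) = 0" by (simp only: pev)
      then have "(\<Sum>k\<le>n. coeff (R k) e * PE j k 0) = 0" by (simp only: of_real_eq_0_iff)
      then show "(\<Sum>k\<le>n. coeff (R k) e * poly_eval V0 (m k) (c j k) x) = 0"
        by (simp add: PE_def)
    qed
    then show "poly_eval V0 (m k) (c j k) x = 0"
      using triangular[OF degR, of "\<lambda>k. poly_eval V0 (m k) (c j k) x"] k by blast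
  qed
qed



lemma sum_delta_mult:
  fixes r :: real and f :: "'a \<Rightarrow> real"
  assumes "finite A" "j \<in> A"
  shows "(\<Sum>k\<in>A. (if k = j then r else 0) * f k) = r * f j"
proof -
  have "(\<Sum>k\<in>A. (if k = j then r else 0) * f k) = (\<Sum>k\<in>A. if k = j then r * f j else 0)"
    by (intro sum.cong) auto
  then show ?thesis using assms by simp
qed

lemma sum_delta2_mult:
  fixes r1 r2 :: real and f :: "'a \<Rightarrow> real"
  assumes "finite A" "i \<in> A" "j \<in> A"
  shows "(\<Sum>k\<in>A. ((if k = i then r1 else 0) + (if k = j then r2 else 0)) * f k) = r1 * f i + r2 * f j"
proof -
  have "(\<Sum>k\<in>A. ((if k = i then r1 else 0) + (if k = j then r2 else 0)) * f k)
     = (\<Sum>k\<in>A. (if k = i then r1 else 0) * f k) + (\<Sum>k\<in>A. (if k = j then r2 else 0) * f k)"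
    by (simp only: distrib_right sum.distrib)
  also have "\<dots> = r1 * f i + r2 * f j"
    by (simp only: sum_delta_mult[OF assms(1,2)] sum_delta_mult[OF assms(1,3)])
  finally show ?thesis .
qed

definition zidx :: "'v set \<Rightarrow> 'v \<Rightarrow> nat" where
  "zidx V = (\<lambda>i. if i \<in> V then 0 else undefined)"

lemma zidx_in: "zidx V \<in> multi_idx V d"
  unfolding multi_idx_def zidx_def by (auto simp: PiE_iff extensional_def)

lemma poly_eval_const:
  assumes "finite V"
  shows "poly_eval V d (\<lambda>\<alpha>. if \<alpha> = zidx V then r else 0) x = r"
proof -
  have "poly_eval V d (\<lambda>\<alpha>. if \<alpha> = zidx V then r else 0) x
      = (\<Sum>\<alpha>\<in>multi_idx V d. if \<alpha> = zidx V then r * (\<Prod>i\<in>V. x i ^ zidx V i) else 0)"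
    unfolding poly_eval_def by (intro sum.cong) auto
  also have "\<dots> = r * (\<Prod>i\<in>V. x i ^ zidx V i)"
    using finite_multi_idx[OF assms] zidx_in[of V d] by simp
  also have "(\<Prod>i\<in>V. x i ^ zidx V i) = 1" by (intro prod.neutral) (simp add: zidx_def)
  finally show ?thesis by simp
qed

lemma E_sub_E0:
  assumes fin1: "finite V1" and psi: "\<psi> = sigmoid \<or> \<psi> = tanh" and Xne: "X \<noteq> {}"
  shows "efficient_set \<psi> V0 V1 V2 X \<subseteq> E0_set V0 V1 V2"
proof
  fix \<theta> assume th: "\<theta> \<in> efficient_set \<psi> V0 V1 V2 X"
  obtain w \<beta> where wb: "\<theta> = (w, \<beta>)" by fastforce
  have T: "(w, \<beta>) \<in> Theta V0 V1 V2" and out: "\<forall>k\<in>V1. \<exists>l\<in>V2. w (k, l) \<noteq> 0"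
    and lin: "\<And>l0 lam. (\<forall>x\<in>X. l0 + (\<Sum>j\<in>V1. lam j * \<psi> (preact V0 w \<beta> j x)) = 0) \<Longrightarrow> l0 = 0 \<and> (\<forall>j\<in>V1. lam j = 0)"
    using th wb unfolding efficient_set_def by auto
  have inw: "\<forall>j\<in>V1. \<exists>i\<in>V0. w (i, j) \<noteq> 0"
  proof (rule ccontr)
    assume "\<not> ?thesis"
    then obtain j where j: "j \<in> V1" "\<forall>i\<in>V0. w (i, j) = 0" by auto
    have pc: "preact V0 w \<beta> j x = \<beta> j" for x using j(2) by (simp add: preact_def)
    define lam where "lam k = (if k = j then (1::real) else 0)" for k
    have "\<forall>x\<in>X. - \<psi> (\<beta> j) + (\<Sum>k\<in>V1. lam k * \<psi> (preact V0 w \<beta> k x)) = 0"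
      unfolding lam_def using sum_delta_mult[OF fin1 j(1)] pc by simp
    then have "lam j = 0" using lin j(1) by blast
    then show False by (simp add: lam_def)
  qed
  have pairs: "\<not> ((\<forall>l\<in>V0. w (l, i) = w (l, j)) \<and> \<beta> i = \<beta> j) \<and> \<not> ((\<forall>l\<in>V0. w (l, i) = - w (l, j)) \<and> \<beta> i = - \<beta> j)"
    if ij: "i \<in> V1" "j \<in> V1" "i \<noteq> j" for i j
  proof (intro conjI notI)
    assume h: "(\<forall>l\<in>V0. w (l, i) = w (l, j)) \<and> \<beta> i = \<beta> j"
    have pe: "preact V0 w \<beta> i x = preact V0 w \<beta> j x" for x
    proof -
      have "(\<Sum>l\<in>V0. x l * w (l, i)) = (\<Sum>l\<in>V0. x l * w (l, j))" using h by (intro sum.cong) auto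
      then show ?thesis using h unfolding preact_def by simp
    qed
    define lam where "lam k = (if k = i then (1::real) else 0) + (if k = j then -1 else 0)" for k
    have "\<forall>x\<in>X. 0 + (\<Sum>k\<in>V1. lam k * \<psi> (preact V0 w \<beta> k x)) = 0"
      unfolding lam_def using sum_delta2_mult[OF fin1 ij(1,2)] pe by simp
    then have "lam i = 0" using lin ij(1) by blast
    then show False using ij(3) by (simp add: lam_def)
  next
    assume h: "(\<forall>l\<in>V0. w (l, i) = - w (l, j)) \<and> \<beta> i = - \<beta> j"
    have pe: "preact V0 w \<beta> i x = - preact V0 w \<beta> j x" for x
    proof -
      have "(\<Sum>l\<in>V0. x l * w (l, i)) = (\<Sum>l\<in>V0. - (x l * w (l, j)))" using h by (intro sum.cong) auto
      then show ?thesis using h unfolding preact_def by (simp add: sum_negf)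
    qed
    define lam where "lam k = (if k = i then (1::real) else 0) + (if k = j then 1 else 0)" for k
    define l0 where "l0 = (if \<psi> = sigmoid then (-1::real) else 0)"
    have "\<psi> (- z) + \<psi> z = - l0" for z
    proof (cases "\<psi> = sigmoid")
      case True
      then show ?thesis by (simp add: l0_def sigmoid_odd)
    next
      case False
      then have "\<psi> = tanh" using psi by blast
      then show ?thesis using False by (simp add: l0_def)
    qed
    then have "\<forall>x\<in>X. l0 + (\<Sum>k\<in>V1. lam k * \<psi> (preact V0 w \<beta> k x)) = 0"
      unfolding lam_def using sum_delta2_mult[OF fin1 ij(1,2)] pe by simp
    then have "lam i = 0" using lin ij(1) by blast
    then show False using ij(3) by (simp add: lam_def)
  qed
  show "\<theta> \<in> E0_set V0 V1 V2"
    unfolding wb E0_set_def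
  proof (rule CollectI, unfold case_prod_conv, intro conjI)
    show "(w, \<beta>) \<in> Theta V0 V1 V2" by (rule T)
    show "\<forall>j\<in>V1. \<exists>l\<in>V2. w (j, l) \<noteq> 0" by (rule out)
    show "\<forall>j\<in>V1. \<exists>i\<in>V0. w (i, j) \<noteq> 0" by (rule inw)
    show "\<forall>i\<in>V1. \<forall>j\<in>V1. i \<noteq> j \<longrightarrow>
        \<not> ((\<forall>l\<in>V0. w (l, i) = w (l, j)) \<and> \<beta> i = \<beta> j) \<and>
        \<not> ((\<forall>l\<in>V0. w (l, i) = - w (l, j)) \<and> \<beta> i = - \<beta> j)"
      using pairs by (intro ballI impI) 
  qed
qed



lemma EP_sub_E:
  fixes V0 V1 V2 :: "'v set"
  assumes fin0: "finite V0"
  shows "poly_efficient_set \<psi> n mE m V0 V1 V2 X \<subseteq> efficient_set \<psi> V0 V1 V2 X"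
proof
  fix \<theta> assume th: "\<theta> \<in> poly_efficient_set \<psi> n mE m V0 V1 V2 X"
  obtain w \<beta> where wb: "\<theta> = (w, \<beta>)" by fastforce
  have T: "(w, \<beta>) \<in> Theta V0 V1 V2" and out: "\<forall>k\<in>V1. \<exists>l\<in>V2. w (k, l) \<noteq> 0"
    and lin: "\<And>cE c. (\<forall>x\<in>X. poly_eval V0 mE cE x
            + (\<Sum>j\<in>V1. \<Sum>k\<le>n. poly_eval V0 (m k) (c j k) x
                 * (deriv ^^ k) \<psi> (preact V0 w \<beta> j x)) = 0)
        \<Longrightarrow> (\<forall>\<alpha>\<in>multi_idx V0 mE. cE \<alpha> = 0) \<and>
            (\<forall>j\<in>V1. \<forall>k\<le>n. \<forall>\<alpha>\<in>multi_idx V0 (m k). c j k \<alpha> = 0)"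
    using th wb unfolding poly_efficient_set_def by auto
  have main: "\<forall>(l0::real) (lam::'v \<Rightarrow> real).
        (\<forall>x\<in>X. l0 + (\<Sum>j\<in>V1. lam j * \<psi> (preact V0 w \<beta> j x)) = 0)
        \<longrightarrow> l0 = 0 \<and> (\<forall>j\<in>V1. lam j = 0)"
  proof (intro allI impI)
    fix l0 :: real and lam :: "'v \<Rightarrow> real"
    assume h: "\<forall>x\<in>X. l0 + (\<Sum>j\<in>V1. lam j * \<psi> (preact V0 w \<beta> j x)) = 0"
    define cE where "cE = (\<lambda>\<alpha>. if \<alpha> = zidx V0 then l0 else 0)"
    define c :: "'v \<Rightarrow> nat \<Rightarrow> ('v \<Rightarrow> nat) \<Rightarrow> real" where "c j k = (\<lambda>\<alpha>. if \<alpha> = zidx V0 then (if k = 0 then lam j else 0) else 0)" for j k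
    have pe1: "poly_eval V0 mE cE x = l0" for x unfolding cE_def by (rule poly_eval_const[OF fin0])
    have pe2: "poly_eval V0 (m k) (c j k) x = (if k = 0 then lam j else 0)" for j k x
      unfolding c_def by (rule poly_eval_const[OF fin0])
    have inner: "(\<Sum>k\<le>n. (if k = 0 then lam j else 0) * (deriv ^^ k) \<psi> z) = lam j * \<psi> z" for j z
      using sum_delta_mult[of "{..n}" 0 "lam j" "\<lambda>k. (deriv ^^ k) \<psi> z"] by simp
    have "\<forall>x\<in>X. poly_eval V0 mE cE x
            + (\<Sum>j\<in>V1. \<Sum>k\<le>n. poly_eval V0 (m k) (c j k) x
                 * (deriv ^^ k) \<psi> (preact V0 w \<beta> j x)) = 0"
      using h by (simp only: pe1 pe2 inner)
    from lin[OF this] have "cE (zidx V0) = 0" "\<forall>j\<in>V1. c j 0 (zidx V0) = 0"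
      using zidx_in[of V0 mE] zidx_in[of V0 "m 0"] by auto
    then show "l0 = 0 \<and> (\<forall>j\<in>V1. lam j = 0)" by (simp add: cE_def c_def)
  qed
  show "\<theta> \<in> efficient_set \<psi> V0 V1 V2 X"
    unfolding wb efficient_set_def
  proof (rule CollectI, unfold case_prod_conv, intro conjI)
    show "(w, \<beta>) \<in> Theta V0 V1 V2" by (rule T)
    show "\<forall>k\<in>V1. \<exists>l\<in>V2. w (k, l) \<noteq> 0" by (rule out)
  qed (rule main)
qed



lemma E0_sub_EP:
  fixes V0 V1 V2 :: "'v set"
  assumes fin0: "finite V0" and fin1: "finite V1" and psi: "\<psi> = sigmoid \<or> \<psi> = tanh"
    and opn: "openin (product_topology (\<lambda>_. euclideanreal) V0) U" "x0 \<in> U" "U \<subseteq> X"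
  shows "E0_set V0 V1 V2 \<subseteq> poly_efficient_set \<psi> n mE m V0 V1 V2 X"
proof
  fix \<theta> assume th: "\<theta> \<in> E0_set V0 V1 V2"
  obtain w \<beta> where wb: "\<theta> = (w, \<beta>)" by fastforce
  have T: "(w, \<beta>) \<in> Theta V0 V1 V2" and out: "\<forall>j\<in>V1. \<exists>l\<in>V2. w (j, l) \<noteq> 0"
    and inw: "\<forall>j\<in>V1. \<exists>i\<in>V0. w (i, j) \<noteq> 0"
    and dst: "\<forall>i\<in>V1. \<forall>j\<in>V1. i \<noteq> j \<longrightarrow>
        \<not> ((\<forall>l\<in>V0. w (l, i) = w (l, j)) \<and> \<beta> i = \<beta> j) \<and>
        \<not> ((\<forall>l\<in>V0. w (l, i) = - w (l, j)) \<and> \<beta> i = - \<beta> j)"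
    using th wb unfolding E0_set_def by auto
  obtain cc Q where cc: "cc \<noteq> 0" and dQ: "degree Q = 1" and psiQ: "\<psi> = (\<lambda>x. poly Q (sigmoid (cc * x)))"
    using psi_repr[OF psi] by blast
  have diff: "\<forall>k<n. (deriv ^^ k) \<psi> differentiable_on UNIV"
    unfolding psiQ using differentiable_iter_sig by blast
  obtain \<epsilon> where epos: "\<epsilon> > 0"
    and box: "\<forall>y\<in>PiE V0 (\<lambda>_. UNIV). (\<forall>i\<in>V0. \<bar>y i - x0 i\<bar> < \<epsilon>) \<longrightarrow> y \<in> U"
    using open_box[OF opn(1,2) fin0] by blast
  have main: "\<forall>(cE :: ('v \<Rightarrow> nat) \<Rightarrow> real) (c :: 'v \<Rightarrow> nat \<Rightarrow> ('v \<Rightarrow> nat) \<Rightarrow> real).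
        (\<forall>x\<in>X. poly_eval V0 mE cE x
            + (\<Sum>j\<in>V1. \<Sum>k\<le>n. poly_eval V0 (m k) (c j k) x
                 * (deriv ^^ k) \<psi> (preact V0 w \<beta> j x)) = 0)
        \<longrightarrow> (\<forall>\<alpha>\<in>multi_idx V0 mE. cE \<alpha> = 0) \<and>
            (\<forall>j\<in>V1. \<forall>k\<le>n. \<forall>\<alpha>\<in>multi_idx V0 (m k). c j k \<alpha> = 0)"
  proof (intro allI impI)
    fix cE :: "('v \<Rightarrow> nat) \<Rightarrow> real" and c :: "'v \<Rightarrow> nat \<Rightarrow> ('v \<Rightarrow> nat) \<Rightarrow> real"
    assume h: "\<forall>x\<in>X. poly_eval V0 mE cE x
            + (\<Sum>j\<in>V1. \<Sum>k\<le>n. poly_eval V0 (m k) (c j k) x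
                 * (deriv ^^ k) \<psi> (preact V0 w \<beta> j x)) = 0"
    have eq: "\<forall>y\<in>PiE V0 (\<lambda>_. UNIV). (\<forall>i\<in>V0. \<bar>y i - x0 i\<bar> < \<epsilon>) \<longrightarrow>
        poly_eval V0 mE cE y + (\<Sum>j\<in>V1. \<Sum>k\<le>n. poly_eval V0 (m k) (c j k) y *
          poly (Rseq cc Q k) (sigmoid (cc * preact V0 w \<beta> j y))) = 0"
    proof (intro ballI impI)
      fix y assume y: "y \<in> PiE V0 (\<lambda>_. UNIV)" "\<forall>i\<in>V0. \<bar>y i - x0 i\<bar> < \<epsilon>"
      then have "y \<in> X" using box opn(3) by blast
      then have "poly_eval V0 mE cE y + (\<Sum>j\<in>V1. \<Sum>k\<le>n. poly_eval V0 (m k) (c j k) y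
                 * (deriv ^^ k) \<psi> (preact V0 w \<beta> j y)) = 0" using h by blast
      then show "poly_eval V0 mE cE y + (\<Sum>j\<in>V1. \<Sum>k\<le>n. poly_eval V0 (m k) (c j k) y *
          poly (Rseq cc Q k) (sigmoid (cc * preact V0 w \<beta> j y))) = 0"
        unfolding psiQ deriv_iter_sig by simp
    qed
    have Cz: "\<forall>j\<in>V1. \<forall>k\<le>n. poly_eval V0 (m k) (c j k) y = 0"
      if "y \<in> PiE V0 (\<lambda>_. UNIV)" "\<forall>i\<in>V0. \<bar>y i - x0 i\<bar> < \<epsilon>" for y
      by (rule point_zero[OF fin0 fin1 cc dQ inw dst epos eq that(2)])
    have part2: "\<forall>j\<in>V1. \<forall>k\<le>n. \<forall>\<alpha>\<in>multi_idx V0 (m k). c j k \<alpha> = 0"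
    proof (intro ballI allI impI)
      fix j k assume j: "j \<in> V1" and k: "k \<le> n"
      have "\<forall>y\<in>PiE V0 (\<lambda>_. UNIV). (\<forall>i\<in>V0. \<bar>y i - x0 i\<bar> < \<epsilon>) \<longrightarrow> poly_eval V0 (m k) (c j k) y = 0"
        using Cz j k by blast
      from poly_eval_zero_box[OF fin0 epos this] show "\<And>\<alpha>. \<alpha> \<in> multi_idx V0 (m k) \<Longrightarrow> c j k \<alpha> = 0" by blast
    qed
    have "\<forall>y\<in>PiE V0 (\<lambda>_. UNIV). (\<forall>i\<in>V0. \<bar>y i - x0 i\<bar> < \<epsilon>) \<longrightarrow> poly_eval V0 mE cE y = 0"
    proof (intro ballI impI)
      fix y assume y: "y \<in> PiE V0 (\<lambda>_. UNIV)" "\<forall>i\<in>V0. \<bar>y i - x0 i\<bar> < \<epsilon>"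
      have e2: "(\<Sum>j\<in>V1. \<Sum>k\<le>n. poly_eval V0 (m k) (c j k) y *
          poly (Rseq cc Q k) (sigmoid (cc * preact V0 w \<beta> j y))) = 0"
        using Cz[OF y] by simp
      have e1: "poly_eval V0 mE cE y + (\<Sum>j\<in>V1. \<Sum>k\<le>n. poly_eval V0 (m k) (c j k) y *
          poly (Rseq cc Q k) (sigmoid (cc * preact V0 w \<beta> j y))) = 0"
        using eq y by blast
      show "poly_eval V0 mE cE y = 0" using e1 unfolding e2 by simp
    qed
    from poly_eval_zero_box[OF fin0 epos this] have part1: "\<forall>\<alpha>\<in>multi_idx V0 mE. cE \<alpha> = 0" .
    show "(\<forall>\<alpha>\<in>multi_idx V0 mE. cE \<alpha> = 0) \<and> (\<forall>j\<in>V1. \<forall>k\<le>n. \<forall>\<alpha>\<in>multi_idx V0 (m k). c j k \<alpha> = 0)"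
      using part1 part2 by blast
  qed
  show "\<theta> \<in> poly_efficient_set \<psi> n mE m V0 V1 V2 X"
    unfolding wb poly_efficient_set_def
  proof (rule CollectI, unfold case_prod_conv, intro conjI)
    show "(w, \<beta>) \<in> Theta V0 V1 V2" by (rule T)
    show "\<forall>k\<in>V1. \<exists>l\<in>V2. w (k, l) \<noteq> 0" by (rule out)
    show "\<forall>k<n. (deriv ^^ k) \<psi> differentiable_on UNIV" by (rule diff)
  qed (rule main)
qed

theorem theorem3p3:
  fixes V0 V1 V2 :: "'v set" and \<psi> :: "real \<Rightarrow> real" and X :: "('v \<Rightarrow> real) set"
    and n mE :: nat and m :: "nat \<Rightarrow> nat"
  assumes "finite V0" "finite V1" "finite V2"
    and "V0 \<inter> V1 = {}" "V0 \<inter> V2 = {}" "V1 \<inter> V2 = {}"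
    and "\<psi> = sigmoid \<or> \<psi> = tanh"
    and "X \<subseteq> topspace (product_topology (\<lambda>_. euclideanreal) V0)"
    and "\<exists>U. openin (product_topology (\<lambda>_. euclideanreal) V0) U \<and> U \<noteq> {} \<and> U \<subseteq> X"
  shows "efficient_set \<psi> V0 V1 V2 X = poly_efficient_set \<psi> n mE m V0 V1 V2 X
       \<and> poly_efficient_set \<psi> n mE m V0 V1 V2 X = E0_set V0 V1 V2"
proof -
  obtain U where U: "openin (product_topology (\<lambda>_. euclideanreal) V0) U" "U \<noteq> {}" "U \<subseteq> X"
    using assms(9) by blast
  then obtain x0 where x0: "x0 \<in> U" by blast
  have Xne: "X \<noteq> {}" using U x0 by blast
  have A: "efficient_set \<psi> V0 V1 V2 X \<subseteq> E0_set V0 V1 V2"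
    by (rule E_sub_E0[OF assms(2) assms(7) Xne])
  have B: "E0_set V0 V1 V2 \<subseteq> poly_efficient_set \<psi> n mE m V0 V1 V2 X"
    by (rule E0_sub_EP[OF assms(1) assms(2) assms(7) U(1) x0 U(3)])
  have C: "poly_efficient_set \<psi> n mE m V0 V1 V2 X \<subseteq> efficient_set \<psi> V0 V1 V2 X"
    by (rule EP_sub_E[OF assms(1)])
  show ?thesis using A B C by blast
qed


end
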